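(* Let $\bar A$ be a real $m\times n$ matrix with $\|\bar A\|\le1$, let $0<\sigma^2\le1$, and let $A$ be obtained from $\bar A$ by adding independent $N(0,\sigma^2)$ random variables to each entry. Then \[ \mathbb E[\log(\|A\|+3)]\le\log\big((\sqrt n+\sqrt m)\sigma+4\big). \]
   Context: $\|\cdot\|$ denotes the spectral norm (largest singular value). *)

theory Defs
  imports "HOL-Probability.Probability"
begin

definition spectral_norm :: "real^'n^'m \<Rightarrow> real" where
  "spectral_norm A = onorm (\<lambda>x. A *v x)"

text \<open>Law of the noise: independent N(0, s^2) entries, indexed by (row, column);
  s is the standard deviation.\<close>
definition gaussian_noise :: "real \<Rightarrow> ('m::finite \<times> 'n::finite \<Rightarrow> real) measure" where
  "gaussian_noise s = PiM UNIV (\<lambda>_. density lborel (normal_density 0 s))"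

definition to_matrix :: "('m \<times> 'n \<Rightarrow> real) \<Rightarrow> real^'n^'m" where
  "to_matrix g = (\<chi> i j. g (i, j))"

end

theory Submission
  imports Defs "HOL-Real_Asymp.Real_Asymp"
begin

lemma normal_density_deriv:
  assumes "0 < s"
  shows "(normal_density 0 s has_real_derivative (- x / s\<^sup>2 * normal_density 0 s x)) (at x)"
  unfolding normal_density_def
  using assms by (auto intro!: derivative_eq_intros simp: field_simps power2_eq_square)

lemma normal_density_tendsto_top:
  assumes "0 < s"
  shows "(normal_density 0 s \<longlongrightarrow> 0) at_top"
  unfolding normal_density_def using assms by real_asymp

lemma normal_density_tendsto_bot:
  assumes "0 < s"
  shows "(normal_density 0 s \<longlongrightarrow> 0) at_bot"
  unfolding normal_density_def using assms by real_asymp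

lemma stein_1d:
  fixes g g' :: "real \<Rightarrow> real"
  assumes s: "0 < s"
    and gB: "\<And>x. \<bar>g x\<bar> \<le> B" and g'B: "\<And>x. \<bar>g' x\<bar> \<le> B'"
    and der: "\<And>x. (g has_real_derivative g' x) (at x)"
    and cont: "\<And>x. isCont g' x"
  shows "(\<integral>x. x * g x \<partial>density lborel (normal_density 0 s)) =
         s\<^sup>2 * (\<integral>x. g' x \<partial>density lborel (normal_density 0 s))"
proof -
  let ?p = "normal_density 0 s"
  have gcont: "isCont g x" for x using der by (rule DERIV_isCont)
  have gm[measurable]: "g \<in> borel_measurable borel"
    using gcont by (intro borel_measurable_continuous_onI continuous_at_imp_continuous_on) auto
  have g'm[measurable]: "g' \<in> borel_measurable borel"
    using cont by (intro borel_measurable_continuous_onI continuous_at_imp_continuous_on) auto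
  have int1: "integrable lborel (\<lambda>x. ?p x * g' x)"
  proof (rule Bochner_Integration.integrable_bound[where f="\<lambda>x. B' * ?p x"])
    show "integrable lborel (\<lambda>x. B' * ?p x)" using integrable_normal_density[OF s, of 0] by simp
    show "AE x in lborel. norm (?p x * g' x) \<le> norm (B' * ?p x)"
    proof (intro AE_I2)
      fix x
      have "\<bar>?p x * g' x\<bar> = ?p x * \<bar>g' x\<bar>" by (simp add: abs_mult)
      also have "\<dots> \<le> ?p x * B'" by (intro mult_left_mono g'B) auto
      finally show "norm (?p x * g' x) \<le> norm (B' * ?p x)"
        by (simp add: mult.commute)
    qed
  qed simp
  have int2: "integrable lborel (\<lambda>x. ?p x * (x * g x))"
  proof (rule Bochner_Integration.integrable_bound[where f="\<lambda>x. B * (?p x * \<bar>x - 0\<bar> ^ 1)"])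
    show "integrable lborel (\<lambda>x. B * (?p x * \<bar>x - 0\<bar> ^ 1))"
      using integrable_normal_moment_abs[OF s, of 0 1] by simp
    show "AE x in lborel. norm (?p x * (x * g x)) \<le> norm (B * (?p x * \<bar>x - 0\<bar> ^ 1))"
    proof (intro AE_I2)
      fix x
      have "\<bar>?p x * (x * g x)\<bar> = ?p x * \<bar>x\<bar> * \<bar>g x\<bar>" by (simp add: abs_mult)
      also have "\<dots> \<le> ?p x * \<bar>x\<bar> * B" by (intro mult_left_mono gB) auto
      finally have "\<bar>?p x * (x * g x)\<bar> \<le> ?p x * \<bar>x\<bar> * B" .
      moreover have "0 \<le> B" using gB[of 0] by linarith
      ultimately show "norm (?p x * (x * g x)) \<le> norm (B * (?p x * \<bar>x - 0\<bar> ^ 1))"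
        by (simp add: abs_mult mult_ac)
    qed
  qed simp
  define F where "F x = s\<^sup>2 * (g x * ?p x)" for x
  define f where "f x = s\<^sup>2 * (?p x * g' x) - ?p x * (x * g x)" for x
  have Fd: "(F has_vector_derivative f x) (at x)" for x
  proof -
    have "(F has_real_derivative s\<^sup>2 * (g' x * ?p x + (- x / s\<^sup>2 * ?p x) * g x)) (at x)"
      unfolding F_def by (intro DERIV_cmult DERIV_mult der normal_density_deriv s)
    moreover have "s\<^sup>2 * (g' x * ?p x + (- x / s\<^sup>2 * ?p x) * g x) = f x"
      using s by (simp add: f_def field_simps)
    ultimately show ?thesis by (simp add: has_real_derivative_iff_has_vector_derivative)
  qed
  have fc: "isCont f x" for x
    unfolding f_def
    using DERIV_isCont[OF normal_density_deriv[OF s]] cont gcont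
    by (intro isCont_diff isCont_mult continuous_const continuous_ident) auto
  have fint: "integrable lborel f"
    unfolding f_def by (intro Bochner_Integration.integrable_diff integrable_mult_right int1 int2)
  have Flim: "(F \<longlongrightarrow> 0) at_top" "(F \<longlongrightarrow> 0) at_bot"
  proof -
    have t1: "((\<lambda>x. B * ?p x) \<longlongrightarrow> B * 0) at_top"
      by (rule tendsto_mult[OF tendsto_const normal_density_tendsto_top[OF s]])
    have t2: "((\<lambda>x. B * ?p x) \<longlongrightarrow> B * 0) at_bot"
      by (rule tendsto_mult[OF tendsto_const normal_density_tendsto_bot[OF s]])
    have le: "norm (s\<^sup>2 * (g x * ?p x)) \<le> s\<^sup>2 * (B * ?p x)" for x
      using gB[of x] by (simp add: abs_mult mult_right_mono mult_left_mono)
    have t1': "((\<lambda>x. s\<^sup>2 * (B * ?p x)) \<longlongrightarrow> 0) at_top"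
      using tendsto_mult[OF tendsto_const t1, of "s\<^sup>2"] by simp
    have t2': "((\<lambda>x. s\<^sup>2 * (B * ?p x)) \<longlongrightarrow> 0) at_bot"
      using tendsto_mult[OF tendsto_const t2, of "s\<^sup>2"] by simp
    show "(F \<longlongrightarrow> 0) at_top"
      unfolding F_def by (rule Lim_null_comparison[OF always_eventually t1']) (use le in blast)
    show "(F \<longlongrightarrow> 0) at_bot"
      unfolding F_def by (rule Lim_null_comparison[OF always_eventually t2']) (use le in blast)
  qed
  have "(LBINT x=-\<infinity>..\<infinity>. f x) = 0 - 0"
  proof (rule interval_integral_FTC_integrable[where F=F])
    show "- \<infinity> < (\<infinity>::ereal)" by simp
    show "(F has_vector_derivative f x) (at x)" for x by (rule Fd)
    show "isCont f x" for x by (rule fc)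
    show "set_integrable lborel (einterval (- \<infinity>) \<infinity>) f"
      unfolding set_integrable_def using fint by simp
    show "((F \<circ> real_of_ereal) \<longlongrightarrow> 0) (at_right (- \<infinity>))"
      unfolding ereal_tendsto_simps1 by (rule Flim)
    show "((F \<circ> real_of_ereal) \<longlongrightarrow> 0) (at_left \<infinity>)"
      unfolding ereal_tendsto_simps1 by (rule Flim)
  qed
  then have "(\<integral>x. f x \<partial>lborel) = 0"
    by (simp add: interval_lebesgue_integral_def set_lebesgue_integral_def)
  then have "s\<^sup>2 * (\<integral>x. ?p x * g' x \<partial>lborel) = (\<integral>x. ?p x * (x * g x) \<partial>lborel)"
    using int1 int2 by (simp add: f_def)
  then show ?thesis
  proof -
    have e1: "(\<integral>x. x * g x \<partial>density lborel ?p) = (\<integral>x. ?p x * (x * g x) \<partial>lborel)"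
      apply (subst integral_density) apply measurable done
    have e2: "(\<integral>x. g' x \<partial>density lborel ?p) = (\<integral>x. ?p x * g' x \<partial>lborel)"
      apply (subst integral_density) apply measurable done
    show ?thesis unfolding e1 e2 using \<open>s\<^sup>2 * _ = _\<close> by simp
  qed
qed

abbreviation "NG s \<equiv> density lborel (normal_density 0 s)"
abbreviation "PG s \<equiv> (PiM UNIV (\<lambda>_. NG s) :: ('d::finite \<Rightarrow> real) measure)"

lemma prob_NG: "0 < s \<Longrightarrow> prob_space (NG s)"
  using prob_space_normal_density by auto

lemma prob_PG: "0 < s \<Longrightarrow> prob_space (PG s)"
  by (intro prob_space_PiM prob_NG)

lemma integrable_NG_id: "0 < s \<Longrightarrow> integrable (NG s) (\<lambda>x. x)"
  by (subst integrable_density) (auto simp: integrable_normal_moment_nz_1)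

lemma integrable_NG_sq: "0 < s \<Longrightarrow> integrable (NG s) (\<lambda>x. x\<^sup>2)"
  using integrable_normal_moment[of s 0 2]
  by (subst integrable_density) auto

lemma integral_NG_sq: "0 < s \<Longrightarrow> (\<integral>x. x\<^sup>2 \<partial>NG s) = s\<^sup>2"
  using integral_normal_moment_even[of s 0 1]
  by (subst integral_density) auto

lemma PG_component: "0 < s \<Longrightarrow> distr (PG s) (NG s) (\<lambda>w. w a) = NG s"
  by (rule distr_PiM_component) (auto intro: prob_NG)

lemma integrable_PG_comp:
  fixes f :: "real \<Rightarrow> real"
  assumes "0 < s" "integrable (NG s) f"
  shows "integrable (PG s) (\<lambda>w. f (w a))"
proof -
  have e: "distr (PG s) (NG s) (\<lambda>w. w a) = NG s" by (rule PG_component[OF assms(1)])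
  have "integrable (distr (PG s) (NG s) (\<lambda>w. w a)) f"
    unfolding e by (rule assms(2))
  moreover have m: "(\<lambda>w. w a) \<in> measurable (PG s) (NG s)"
    by (rule measurable_component_singleton) simp
  ultimately show ?thesis
    using integrable_distr_eq[OF m, of f] assms(2) by auto
qed

lemma integral_PG_comp:
  fixes f :: "real \<Rightarrow> real"
  assumes "0 < s" "f \<in> borel_measurable borel"
  shows "(\<integral>w. f (w a) \<partial>PG s) = (\<integral>x. f x \<partial>NG s)"
proof -
  have e: "distr (PG s) (NG s) (\<lambda>w. w a) = NG s" by (rule PG_component[OF assms(1)])
  have "(\<integral>w. f (w a) \<partial>PG s) = (\<integral>x. f x \<partial>distr (PG s) (NG s) (\<lambda>w. w a))"
  proof (rule integral_distr[symmetric])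
    show "(\<lambda>w. w a) \<in> measurable (PG s) (NG s)"
      by (rule measurable_component_singleton) simp
    have "sets (NG s) = sets borel" by simp
    then show "f \<in> borel_measurable (NG s)"
      using assms(2) measurable_cong_sets[OF \<open>sets (NG s) = sets borel\<close> refl] by simp
  qed
  then show ?thesis unfolding e .
qed

lemma stein_multi:
  fixes f f' :: "('d::finite \<Rightarrow> real) \<Rightarrow> real" and a :: 'd
  assumes s: "0 < s"
    and fm: "f \<in> borel_measurable (PG s)" and f'm: "f' \<in> borel_measurable (PG s)"
    and fB: "\<And>w. \<bar>f w\<bar> \<le> B" and f'B: "\<And>w. \<bar>f' w\<bar> \<le> B'"
    and der: "\<And>w t. ((\<lambda>r. f (w(a:=r))) has_real_derivative f' (w(a:=t))) (at t)"
    and cont: "\<And>w t. isCont (\<lambda>r. f' (w(a:=r))) t"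
  shows "(\<integral>w. w a * f w \<partial>PG s) = s\<^sup>2 * (\<integral>w. f' w \<partial>PG s)"
proof -
  interpret product_sigma_finite "\<lambda>_::'d. NG s"
    unfolding product_sigma_finite_def using prob_NG[OF s]
    by (simp add: prob_space_imp_sigma_finite)
  define I where "I = UNIV - {a}"
  have UI: "UNIV = insert a I" and aI: "a \<notin> I" and fI: "finite I" unfolding I_def by auto
  have int1: "integrable (PG s) (\<lambda>w. w a * f w)"
  proof (rule Bochner_Integration.integrable_bound[where f="\<lambda>w. B * \<bar>w a\<bar>"])
    show "integrable (PG s) (\<lambda>w. B * \<bar>w a\<bar>)"
      using integrable_PG_comp[OF s integrable_abs[OF integrable_NG_id[OF s]], of a] by simp
    show "(\<lambda>w. w a * f w) \<in> borel_measurable (PG s)"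
      using fm by measurable
    show "AE w in PG s. norm (w a * f w) \<le> norm (B * \<bar>w a\<bar>)"
    proof (intro AE_I2)
      fix w
      have "0 \<le> B" using fB[of w] by linarith
      have "\<bar>f w\<bar> * \<bar>w a\<bar> \<le> B * \<bar>w a\<bar>" by (rule mult_right_mono) (use fB in auto)
      then show "norm (w a * f w) \<le> norm (B * \<bar>w a\<bar>)"
        using \<open>0 \<le> B\<close> by (simp add: abs_mult mult.commute)
    qed
  qed
  have int2: "integrable (PG s) f'"
  proof (rule Bochner_Integration.integrable_bound[where f="\<lambda>w. B'"])
    interpret prob_space "PG s" by (rule prob_PG[OF s])
    show "integrable (PG s) (\<lambda>w. B')" by simp
    show "AE w in PG s. norm (f' w) \<le> norm B'"
      using f'B by (auto intro!: AE_I2 order_trans[OF _ abs_ge_self])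
  qed (rule f'm)
  have "(\<integral>w. w a * f w \<partial>PG s) = (\<integral>x. (\<integral>y. (x(a:=y)) a * f (x(a:=y)) \<partial>NG s) \<partial>PiM I (\<lambda>_. NG s))"
    using product_integral_insert[OF fI aI, of "\<lambda>w. w a * f w"] int1 unfolding UI by simp
  also have "\<dots> = (\<integral>x. s\<^sup>2 * (\<integral>y. f' (x(a:=y)) \<partial>NG s) \<partial>PiM I (\<lambda>_. NG s))"
  proof (rule Bochner_Integration.integral_cong[OF refl])
    fix x
    show "(\<integral>y. (x(a:=y)) a * f (x(a:=y)) \<partial>NG s) = s\<^sup>2 * (\<integral>y. f' (x(a:=y)) \<partial>NG s)"
      using stein_1d[OF s, of "\<lambda>y. f (x(a:=y))" B "\<lambda>y. f' (x(a:=y))" B'] fB f'B der cont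
      by simp
  qed
  also have "\<dots> = s\<^sup>2 * (\<integral>x. (\<integral>y. f' (x(a:=y)) \<partial>NG s) \<partial>PiM I (\<lambda>_. NG s))"
    by simp
  also have "(\<integral>x. (\<integral>y. f' (x(a:=y)) \<partial>NG s) \<partial>PiM I (\<lambda>_. NG s)) = (\<integral>w. f' w \<partial>PG s)"
    using product_integral_insert[OF fI aI, of f'] int2 unfolding UI by simp
  finally show ?thesis .
qed

definition lse :: "'k set \<Rightarrow> real \<Rightarrow> ('k \<Rightarrow> real) \<Rightarrow> real" where
  "lse K b x = ln (\<Sum>k\<in>K. exp (b * x k))"

definition smax :: "'k set \<Rightarrow> real \<Rightarrow> ('k \<Rightarrow> real) \<Rightarrow> 'k \<Rightarrow> real" where
  "smax K b x k = exp (b * x k) / (\<Sum>l\<in>K. exp (b * x l))"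

lemma sum_exp_pos: "finite K \<Longrightarrow> K \<noteq> {} \<Longrightarrow> 0 < (\<Sum>l\<in>K. exp (b * x l :: real))"
  by (intro sum_pos) auto

lemma smax_nonneg: "0 \<le> smax K b x k"
  unfolding smax_def by (intro divide_nonneg_nonneg sum_nonneg) auto

lemma smax_sum: "finite K \<Longrightarrow> K \<noteq> {} \<Longrightarrow> (\<Sum>k\<in>K. smax K b x k) = 1"
  unfolding smax_def using sum_exp_pos[of K b x]
  by (simp add: sum_divide_distrib[symmetric])

lemma smax_le1: "finite K \<Longrightarrow> k \<in> K \<Longrightarrow> smax K b x k \<le> 1"
proof -
  assume K: "finite K" "k \<in> K"
  then have "exp (b * x k) \<le> (\<Sum>l\<in>K. exp (b * x l))"
    by (intro member_le_sum) auto
  then show ?thesis unfolding smax_def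
    using sum_exp_pos[of K b x] K by (auto simp: divide_le_eq_1)
qed

lemma lse_deriv:
  fixes x :: "'k \<Rightarrow> real \<Rightarrow> real" and x' :: "'k \<Rightarrow> real"
  assumes K: "finite K" "K \<noteq> {}"
    and d: "\<And>k. k \<in> K \<Longrightarrow> ((x k) has_real_derivative x' k) (at t)"
  shows "((\<lambda>t. lse K b (\<lambda>k. x k t)) has_real_derivative
           (\<Sum>k\<in>K. smax K b (\<lambda>k. x k t) k * (b * x' k))) (at t)"
proof -
  let ?S = "\<Sum>l\<in>K. exp (b * x l t)"
  have S: "0 < ?S" by (rule sum_exp_pos[OF K])
  have dS: "((\<lambda>t. \<Sum>l\<in>K. exp (b * x l t)) has_real_derivative (\<Sum>l\<in>K. exp (b * x l t) * (b * x' l))) (at t)"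
    by (intro DERIV_sum DERIV_fun_exp DERIV_cmult d)
  have "((\<lambda>t. ln (\<Sum>l\<in>K. exp (b * x l t))) has_real_derivative (inverse ?S) * (\<Sum>l\<in>K. exp (b * x l t) * (b * x' l))) (at t)"
    by (rule DERIV_chain2[OF DERIV_ln[OF S] dS])
  moreover have "(inverse ?S) * (\<Sum>l\<in>K. exp (b * x l t) * (b * x' l)) = (\<Sum>k\<in>K. smax K b (\<lambda>k. x k t) k * (b * x' k))"
    unfolding smax_def by (simp add: sum_divide_distrib field_simps)
  ultimately show ?thesis unfolding lse_def by simp
qed

lemma smax_deriv:
  fixes x :: "'k \<Rightarrow> real \<Rightarrow> real" and x' :: "'k \<Rightarrow> real"
  assumes K: "finite K" "K \<noteq> {}"
    and d: "\<And>k. k \<in> K \<Longrightarrow> ((x k) has_real_derivative x' k) (at t)"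
    and dk: "((x k) has_real_derivative x' k) (at t)"
  shows "((\<lambda>t. smax K b (\<lambda>k. x k t) k) has_real_derivative
           b * smax K b (\<lambda>k. x k t) k * (x' k - (\<Sum>l\<in>K. smax K b (\<lambda>k. x k t) l * x' l))) (at t)"
proof -
  let ?S = "\<Sum>l\<in>K. exp (b * x l t)"
  let ?S' = "\<Sum>l\<in>K. exp (b * x l t) * (b * x' l)"
  have S: "0 < ?S" by (rule sum_exp_pos[OF K])
  have dS: "((\<lambda>t. \<Sum>l\<in>K. exp (b * x l t)) has_real_derivative ?S') (at t)"
    by (intro DERIV_sum DERIV_fun_exp DERIV_cmult d)
  have dE: "((\<lambda>t. exp (b * x k t)) has_real_derivative exp (b * x k t) * (b * x' k)) (at t)"
    by (intro DERIV_fun_exp DERIV_cmult dk)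
  have "((\<lambda>t. exp (b * x k t) / (\<Sum>l\<in>K. exp (b * x l t))) has_real_derivative
      (exp (b * x k t) * (b * x' k) * ?S - exp (b * x k t) * ?S') / (?S * ?S)) (at t)"
    using DERIV_divide[OF dE dS] S by simp
  moreover have "(exp (b * x k t) * (b * x' k) * ?S - exp (b * x k t) * ?S') / (?S * ?S) =
      b * smax K b (\<lambda>k. x k t) k * (x' k - (\<Sum>l\<in>K. smax K b (\<lambda>k. x k t) l * x' l))"
    unfolding smax_def using S
    by (simp add: sum_divide_distrib[symmetric] sum_distrib_left field_simps)
  ultimately show ?thesis unfolding smax_def by simp
qed

lemma lse_ge: "finite K \<Longrightarrow> k \<in> K \<Longrightarrow> b * x k \<le> lse K b x"
proof -
  assume K: "finite K" "k \<in> K"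
  then have "exp (b * x k) \<le> (\<Sum>l\<in>K. exp (b * x l))"
    by (intro member_le_sum) auto
  moreover have "0 < (\<Sum>l\<in>K. exp (b * x l))"
    using K by (intro sum_pos2[of K k]) auto
  ultimately have "ln (exp (b * x k)) \<le> lse K b x"
    unfolding lse_def by (subst ln_le_cancel_iff) auto
  then show ?thesis by simp
qed

lemma lse_le:
  assumes K: "finite K" "K \<noteq> {}" and b: "0 \<le> b" and M: "\<And>k. k \<in> K \<Longrightarrow> x k \<le> M"
  shows "lse K b x \<le> ln (card K) + b * M"
proof -
  have "(\<Sum>l\<in>K. exp (b * x l)) \<le> (\<Sum>l\<in>K. exp (b * M))"
    using M b by (intro sum_mono) (auto intro: mult_left_mono)
  also have "\<dots> = card K * exp (b * M)" by simp
  finally have "lse K b x \<le> ln (card K * exp (b * M))"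
    unfolding lse_def using sum_exp_pos[OF K, of b x] by (subst ln_le_cancel_iff) auto
  also have "\<dots> = ln (card K) + b * M"
    using K by (simp add: ln_mult card_gt_0_iff)
  finally show ?thesis .
qed

lemma lse_abs:
  assumes K: "finite K" "K \<noteq> {}" and b: "0 \<le> b"
  shows "\<bar>lse K b x\<bar> \<le> ln (card K) + b * (\<Sum>k\<in>K. \<bar>x k\<bar>)"
proof -
  obtain k where k: "k \<in> K" using K by auto
  have xk: "\<bar>x k\<bar> \<le> (\<Sum>k\<in>K. \<bar>x k\<bar>)"
    using K k by (intro member_le_sum) auto
  have up: "lse K b x \<le> ln (card K) + b * (\<Sum>k\<in>K. \<bar>x k\<bar>)"
  proof (rule lse_le[OF K b])
    fix k assume "k \<in> K"
    show "x k \<le> (\<Sum>k\<in>K. \<bar>x k\<bar>)"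
      by (rule order_trans[OF abs_ge_self], rule member_le_sum) (use K \<open>k \<in> K\<close> in auto)
  qed
  have "- (b * (\<Sum>k\<in>K. \<bar>x k\<bar>)) \<le> b * x k"
  proof -
    have "- (\<Sum>k\<in>K. \<bar>x k\<bar>) \<le> x k" using xk by linarith
    then have "b * (- (\<Sum>k\<in>K. \<bar>x k\<bar>)) \<le> b * x k" using b by (rule mult_left_mono)
    then show ?thesis by simp
  qed
  also have "\<dots> \<le> lse K b x" by (rule lse_ge[OF K(1) k])
  finally have lo: "- (b * (\<Sum>k\<in>K. \<bar>x k\<bar>)) \<le> lse K b x" .
  have "0 \<le> ln (card K)" using K by (simp add: Suc_leI card_gt_0_iff)
  then show ?thesis using up lo by linarith
qed

lemma lin_upd:
  fixes c w :: "'d::finite \<Rightarrow> real"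
  shows "(\<Sum>b\<in>UNIV. c b * (w(a:=r)) b) = (\<Sum>b\<in>UNIV. c b * w b) + c a * (r - w a)"
proof -
  have "(\<Sum>b\<in>UNIV. c b * (w(a:=r)) b) = (\<Sum>b\<in>UNIV. c b * w b + (if b = a then c a * (r - w a) else 0))"
    by (intro sum.cong) (auto simp: algebra_simps)
  also have "\<dots> = (\<Sum>b\<in>UNIV. c b * w b) + c a * (r - w a)"
    by (simp add: sum.distrib)
  finally show ?thesis .
qed

lemma quad_form:
  fixes p :: "'k \<Rightarrow> real" and D :: "'k \<Rightarrow> 'k \<Rightarrow> real"
  assumes K: "finite K" and p: "\<And>k. k \<in> K \<Longrightarrow> 0 \<le> p k" and ps: "(\<Sum>k\<in>K. p k) = 1"
    and D: "\<And>k l. k \<in> K \<Longrightarrow> l \<in> K \<Longrightarrow> 0 \<le> D k k + D l l - 2 * D k l"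
  shows "0 \<le> (\<Sum>k\<in>K. p k * D k k) - (\<Sum>k\<in>K. \<Sum>l\<in>K. p k * p l * D k l)"
proof -
  have e1: "(\<Sum>k\<in>K. p k * D k k) = (\<Sum>k\<in>K. \<Sum>l\<in>K. p k * p l * D k k)"
  proof (intro sum.cong refl)
    fix k
    have "(\<Sum>l\<in>K. p k * p l * D k k) = p k * D k k * (\<Sum>l\<in>K. p l)"
      by (simp add: sum_distrib_left mult_ac)
    then show "p k * D k k = (\<Sum>l\<in>K. p k * p l * D k k)" using ps by simp
  qed
  have e2: "(\<Sum>k\<in>K. p k * D k k) = (\<Sum>k\<in>K. \<Sum>l\<in>K. p k * p l * D l l)"
  proof -
    have "(\<Sum>k\<in>K. \<Sum>l\<in>K. p k * p l * D l l) = (\<Sum>l\<in>K. \<Sum>k\<in>K. p k * p l * D l l)"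
      by (rule sum.swap)
    also have "\<dots> = (\<Sum>l\<in>K. p l * D l l)"
    proof (intro sum.cong refl)
      fix l
      have "(\<Sum>k\<in>K. p k * p l * D l l) = p l * D l l * (\<Sum>k\<in>K. p k)"
        by (simp add: sum_distrib_left mult_ac)
      then show "(\<Sum>k\<in>K. p k * p l * D l l) = p l * D l l" using ps by simp
    qed
    finally show ?thesis by simp
  qed
  have "0 \<le> (\<Sum>k\<in>K. \<Sum>l\<in>K. p k * p l * (D k k + D l l - 2 * D k l))"
    using p D by (intro sum_nonneg mult_nonneg_nonneg) auto
  also have "\<dots> = (\<Sum>k\<in>K. \<Sum>l\<in>K. p k * p l * D k k) + (\<Sum>k\<in>K. \<Sum>l\<in>K. p k * p l * D l l)
       - 2 * (\<Sum>k\<in>K. \<Sum>l\<in>K. p k * p l * D k l)"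
  proof -
    have "\<And>k l. p k * p l * (D k k + D l l - 2 * D k l) = p k * p l * D k k + p k * p l * D l l - 2 * (p k * p l * D k l)"
      by (simp add: algebra_simps)
    then show ?thesis
      by (simp only: sum.distrib sum_subtractf sum_distrib_left[symmetric])
  qed
  also have "\<dots> = 2 * ((\<Sum>k\<in>K. p k * D k k) - (\<Sum>k\<in>K. \<Sum>l\<in>K. p k * p l * D k l))"
    using e1 e2 by simp
  finally show ?thesis by simp
qed

definition lin :: "('d::finite \<Rightarrow> real) \<Rightarrow> ('d \<Rightarrow> real) \<Rightarrow> real" where
  "lin c w = (\<Sum>a\<in>UNIV. c a * w a)"

lemma lin_upd': "lin c (w(a:=r)) = lin c w + c a * (r - w a)"
  unfolding lin_def by (rule lin_upd)

lemma lin_deriv_r: "((\<lambda>r. lin c (w(a:=r))) has_real_derivative c a) (at t)"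
proof -
  have "((\<lambda>r. lin c w + c a * (r - w a)) has_real_derivative c a) (at t)"
    by (auto intro!: derivative_eq_intros)
  then show ?thesis by (simp add: lin_upd')
qed

lemma measurable_lin[measurable]: "(\<lambda>w. lin c w) \<in> borel_measurable (PG s)"
  unfolding lin_def by measurable

lemma integrable_lin: "0 < s \<Longrightarrow> integrable (PG s) (\<lambda>w. lin c w)"
  unfolding lin_def
  by (intro Bochner_Integration.integrable_sum integrable_mult_right integrable_PG_comp[where f="\<lambda>x. x", OF _ integrable_NG_id])

lemma integrable_abs_comp: "0 < s \<Longrightarrow> integrable (PG s) (\<lambda>w. \<bar>w a\<bar>)"
  using integrable_PG_comp[OF _ integrable_abs[OF integrable_NG_id], of s a] by simp

locale interp =
  fixes s b :: real and K :: "'k set" and P Q :: "'k \<Rightarrow> 'd::finite \<Rightarrow> real"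
  assumes s: "0 < s" and b: "0 < b" and K: "finite K" "K \<noteq> {}"
    and orth: "\<And>k l. (\<Sum>a\<in>UNIV. P k a * Q l a) = 0"
    and cond: "\<And>k l. k \<in> K \<Longrightarrow> l \<in> K \<Longrightarrow>
       (\<Sum>a\<in>UNIV. P k a * P k a) + (\<Sum>a\<in>UNIV. P l a * P l a) - 2 * (\<Sum>a\<in>UNIV. P k a * P l a)
     \<le> (\<Sum>a\<in>UNIV. Q k a * Q k a) + (\<Sum>a\<in>UNIV. Q l a * Q l a) - 2 * (\<Sum>a\<in>UNIV. Q k a * Q l a)"
begin

definition "Ct t k a = cos t * P k a + sin t * Q k a"
definition "Dt t k a = - sin t * P k a + cos t * Q k a"
definition "Z t w = (\<lambda>k. lin (Ct t k) w)"
definition "Dfun t w = (\<Sum>k\<in>K. smax K b (Z t w) k * (b * lin (Dt t k) w))"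
definition "g' t k a w = b * smax K b (Z t w) k * (Ct t k a - (\<Sum>l\<in>K. smax K b (Z t w) l * Ct t l a))"

lemma meas_smax[measurable]: "(\<lambda>w. smax K b (Z t w) k) \<in> borel_measurable (PG s)"
  unfolding smax_def Z_def by measurable

lemma meas_g'[measurable]: "g' t k a \<in> borel_measurable (PG s)"
  unfolding g'_def by measurable

lemma smax_abs: "\<bar>smax K b x k\<bar> \<le> 1" if "k \<in> K"
  using smax_nonneg[of K b x k] smax_le1[OF K(1) that, of b x] by simp

lemma g'_bound: "k \<in> K \<Longrightarrow> \<bar>g' t k a w\<bar> \<le> b * (\<bar>Ct t k a\<bar> + (\<Sum>l\<in>K. \<bar>Ct t l a\<bar>))"
proof -
  assume k: "k \<in> K"
  have "\<bar>(\<Sum>l\<in>K. smax K b (Z t w) l * Ct t l a)\<bar> \<le> (\<Sum>l\<in>K. \<bar>smax K b (Z t w) l * Ct t l a\<bar>)"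
    by (rule sum_abs)
  also have "\<dots> \<le> (\<Sum>l\<in>K. \<bar>Ct t l a\<bar>)"
  proof (rule sum_mono)
    fix l assume "l \<in> K"
    then have "\<bar>smax K b (Z t w) l\<bar> \<le> 1" by (rule smax_abs)
    then show "\<bar>smax K b (Z t w) l * Ct t l a\<bar> \<le> \<bar>Ct t l a\<bar>"
      by (simp add: abs_mult mult_left_le_one_le)
  qed
  finally have h: "\<bar>Ct t k a - (\<Sum>l\<in>K. smax K b (Z t w) l * Ct t l a)\<bar> \<le> \<bar>Ct t k a\<bar> + (\<Sum>l\<in>K. \<bar>Ct t l a\<bar>)"
    by linarith
  have "\<bar>g' t k a w\<bar> = b * \<bar>smax K b (Z t w) k\<bar> * \<bar>Ct t k a - (\<Sum>l\<in>K. smax K b (Z t w) l * Ct t l a)\<bar>"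
    unfolding g'_def using b by (simp add: abs_mult)
  also have "\<dots> \<le> b * 1 * (\<bar>Ct t k a\<bar> + (\<Sum>l\<in>K. \<bar>Ct t l a\<bar>))"
    using b smax_abs[OF k] h by (intro mult_mono) auto
  finally show ?thesis by simp
qed

lemma smax_deriv_coord:
  "((\<lambda>r. smax K b (Z t (w(a:=r))) k) has_real_derivative g' t k a (w(a:=r0))) (at r0)"
proof -
  have "((\<lambda>r. smax K b (\<lambda>l. lin (Ct t l) (w(a:=r))) k) has_real_derivative
     b * smax K b (\<lambda>l. lin (Ct t l) (w(a:=r0))) k * (Ct t k a - (\<Sum>l\<in>K. smax K b (\<lambda>l. lin (Ct t l) (w(a:=r0))) l * Ct t l a))) (at r0)"
    by (rule smax_deriv[OF K]) (rule lin_deriv_r)+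
  then show ?thesis unfolding g'_def Z_def by simp
qed

lemma smax_cont_coord: "isCont (\<lambda>r. smax K b (Z t (w(a:=r))) k) r0"
  by (rule DERIV_isCont[OF smax_deriv_coord])

lemma g'_cont_coord: "isCont (\<lambda>r. g' t k a (w(a:=r))) r0"
  unfolding g'_def
  by (intro continuous_mult continuous_diff continuous_const continuous_sum smax_cont_coord)

lemma stein_smax:
  assumes k: "k \<in> K"
  shows "(\<integral>w. w a * smax K b (Z t w) k \<partial>PG s) = s\<^sup>2 * (\<integral>w. g' t k a w \<partial>PG s)"
  by (rule stein_multi[OF s, where B=1 and B'="b * (\<bar>Ct t k a\<bar> + (\<Sum>l\<in>K. \<bar>Ct t l a\<bar>))"])
     (use smax_abs[OF k] g'_bound[OF k] smax_deriv_coord g'_cont_coord in auto)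

definition "A t k l = (\<Sum>a\<in>UNIV. Dt t k a * Ct t l a)"

lemma A_eq: "A t k l = sin t * cos t * ((\<Sum>a\<in>UNIV. Q k a * Q l a) - (\<Sum>a\<in>UNIV. P k a * P l a))"
proof -
  have "A t k l = (\<Sum>a\<in>UNIV. sin t * cos t * (Q k a * Q l a) - sin t * cos t * (P k a * P l a)
      + (cos t)\<^sup>2 * (P l a * Q k a) - (sin t)\<^sup>2 * (P k a * Q l a))"
    unfolding A_def Dt_def Ct_def by (intro sum.cong refl) (simp add: algebra_simps power2_eq_square)
  also have "\<dots> = sin t * cos t * (\<Sum>a\<in>UNIV. Q k a * Q l a) - sin t * cos t * (\<Sum>a\<in>UNIV. P k a * P l a)
      + (cos t)\<^sup>2 * (\<Sum>a\<in>UNIV. P l a * Q k a) - (sin t)\<^sup>2 * (\<Sum>a\<in>UNIV. P k a * Q l a)"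
    by (simp add: sum.distrib sum_subtractf sum_distrib_left)
  also have "\<dots> = sin t * cos t * ((\<Sum>a\<in>UNIV. Q k a * Q l a) - (\<Sum>a\<in>UNIV. P k a * P l a))"
    using orth[of k l] orth[of l k] by (simp add: algebra_simps)
  finally show ?thesis .
qed

lemma A_cond:
  assumes t: "0 \<le> t" "t \<le> pi/2" and kl: "k \<in> K" "l \<in> K"
  shows "0 \<le> A t k k + A t l l - 2 * A t k l"
proof -
  have sc: "0 \<le> sin t * cos t"
    using t by (intro mult_nonneg_nonneg sin_ge_zero cos_ge_zero) auto
  have "A t k k + A t l l - 2 * A t k l = sin t * cos t *
     (((\<Sum>a\<in>UNIV. Q k a * Q k a) + (\<Sum>a\<in>UNIV. Q l a * Q l a) - 2 * (\<Sum>a\<in>UNIV. Q k a * Q l a))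
    - ((\<Sum>a\<in>UNIV. P k a * P k a) + (\<Sum>a\<in>UNIV. P l a * P l a) - 2 * (\<Sum>a\<in>UNIV. P k a * P l a)))"
    unfolding A_eq by (simp add: algebra_simps)
  also have "0 \<le> \<dots>"
    using cond[OF kl] by (intro mult_nonneg_nonneg[OF sc]) auto
  finally show ?thesis by simp
qed

lemma pointwise_nonneg:
  assumes t: "0 \<le> t" "t \<le> pi/2"
  shows "0 \<le> (\<Sum>k\<in>K. \<Sum>a\<in>UNIV. Dt t k a * g' t k a w)"
proof -
  define p where "p = smax K b (Z t w)"
  have inner: "(\<Sum>a\<in>UNIV. Dt t k a * g' t k a w) = b * (p k * A t k k - (\<Sum>l\<in>K. p k * p l * A t k l))" for k
  proof -
    have "(\<Sum>a\<in>UNIV. Dt t k a * g' t k a w)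
        = (\<Sum>a\<in>UNIV. b * p k * (Dt t k a * Ct t k a) - b * p k * (\<Sum>l\<in>K. p l * (Dt t k a * Ct t l a)))"
      unfolding g'_def p_def[symmetric]
      by (intro sum.cong refl) (simp add: algebra_simps sum_distrib_left)
    also have "\<dots> = b * p k * A t k k - b * p k * (\<Sum>a\<in>UNIV. \<Sum>l\<in>K. p l * (Dt t k a * Ct t l a))"
      unfolding A_def by (simp add: sum_subtractf sum_distrib_left)
    also have "(\<Sum>a\<in>UNIV. \<Sum>l\<in>K. p l * (Dt t k a * Ct t l a)) = (\<Sum>l\<in>K. p l * A t k l)"
      unfolding A_def by (subst sum.swap) (simp add: sum_distrib_left)
    finally show ?thesis by (simp add: algebra_simps sum_distrib_left)
  qed
  have "(\<Sum>k\<in>K. \<Sum>a\<in>UNIV. Dt t k a * g' t k a w) = b * ((\<Sum>k\<in>K. p k * A t k k) - (\<Sum>k\<in>K. \<Sum>l\<in>K. p k * p l * A t k l))"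
    unfolding inner by (simp only: sum_distrib_left[symmetric] sum_subtractf)
  also have "0 \<le> \<dots>"
  proof (intro mult_nonneg_nonneg)
    show "0 \<le> b" using b by simp
    show "0 \<le> (\<Sum>k\<in>K. p k * A t k k) - (\<Sum>k\<in>K. \<Sum>l\<in>K. p k * p l * A t k l)"
      by (rule quad_form[OF K(1)]) (use smax_nonneg smax_sum[OF K] A_cond[OF t] in \<open>auto simp: p_def\<close>)
  qed
  finally show ?thesis .
qed

lemma integrable_wsmax: "k \<in> K \<Longrightarrow> integrable (PG s) (\<lambda>w. w a * smax K b (Z t w) k)"
proof (rule Bochner_Integration.integrable_bound[OF integrable_abs_comp[OF s, of a]])
  assume k: "k \<in> K"
  show "(\<lambda>w. w a * smax K b (Z t w) k) \<in> borel_measurable (PG s)" by measurable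
  show "AE w in PG s. norm (w a * smax K b (Z t w) k) \<le> norm \<bar>w a\<bar>"
    using smax_abs[OF k] by (auto intro!: AE_I2 simp: abs_mult mult_left_le)
qed

lemma integrable_g': "k \<in> K \<Longrightarrow> integrable (PG s) (g' t k a)"
proof (rule Bochner_Integration.integrable_bound[where f="\<lambda>_. b * (\<bar>Ct t k a\<bar> + (\<Sum>l\<in>K. \<bar>Ct t l a\<bar>))"])
  assume k: "k \<in> K"
  interpret prob_space "PG s" by (rule prob_PG[OF s])
  show "integrable (PG s) (\<lambda>_. b * (\<bar>Ct t k a\<bar> + (\<Sum>l\<in>K. \<bar>Ct t l a\<bar>)))" by simp
  show "AE w in PG s. norm (g' t k a w) \<le> norm (b * (\<bar>Ct t k a\<bar> + (\<Sum>l\<in>K. \<bar>Ct t l a\<bar>)))"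
    using g'_bound[OF k] by (auto intro!: AE_I2 order_trans[OF _ abs_ge_self])
qed simp

lemma Dint_nonneg:
  assumes t: "0 \<le> t" "t \<le> pi/2"
  shows "0 \<le> (\<integral>w. Dfun t w \<partial>PG s)"
proof -
  have pw: "Dfun t w = (\<Sum>k\<in>K. \<Sum>a\<in>UNIV. (b * Dt t k a) * (w a * smax K b (Z t w) k))" for w
    unfolding Dfun_def lin_def by (intro sum.cong refl) (simp add: sum_distrib_left mult_ac)
  have "(\<integral>w. Dfun t w \<partial>PG s) = (\<Sum>k\<in>K. \<Sum>a\<in>UNIV. (b * Dt t k a) * (\<integral>w. w a * smax K b (Z t w) k \<partial>PG s))"
    unfolding pw
    by (simp add: Bochner_Integration.integral_sum Bochner_Integration.integrable_sum integrable_wsmax)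
  also have "\<dots> = (\<Sum>k\<in>K. \<Sum>a\<in>UNIV. (b * Dt t k a) * (s\<^sup>2 * (\<integral>w. g' t k a w \<partial>PG s)))"
    by (intro sum.cong refl) (simp add: stein_smax)
  also have "\<dots> = (\<integral>w. (\<Sum>k\<in>K. \<Sum>a\<in>UNIV. (b * Dt t k a) * (s\<^sup>2 * g' t k a w)) \<partial>PG s)"
    by (simp add: Bochner_Integration.integral_sum Bochner_Integration.integrable_sum integrable_g')
  also have "\<dots> = (\<integral>w. b * s\<^sup>2 * (\<Sum>k\<in>K. \<Sum>a\<in>UNIV. Dt t k a * g' t k a w) \<partial>PG s)"
    by (intro Bochner_Integration.integral_cong refl) (simp add: sum_distrib_left mult_ac)
  also have "0 \<le> \<dots>"
    by (rule Bochner_Integration.integral_nonneg) (use b pointwise_nonneg[OF t] in auto)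
  finally show ?thesis .
qed

definition "H t w = lse K b (Z t w)"

lemma lin_Ct_deriv: "((\<lambda>t. lin (Ct t k) w) has_real_derivative lin (Dt t k) w) (at t)"
  unfolding lin_def Ct_def Dt_def
  by (intro DERIV_sum) (auto intro!: derivative_eq_intros)

lemma H_deriv: "((\<lambda>t. H t w) has_real_derivative Dfun t w) (at t)"
  unfolding H_def Dfun_def Z_def
  by (rule lse_deriv[OF K]) (rule lin_Ct_deriv)

lemma smax_cont_t: "isCont (\<lambda>t. smax K b (Z t w) k) t"
proof -
  have "((\<lambda>t. smax K b (\<lambda>l. lin (Ct t l) w) k) has_real_derivative
     b * smax K b (\<lambda>l. lin (Ct t l) w) k * (lin (Dt t k) w - (\<Sum>l\<in>K. smax K b (\<lambda>l. lin (Ct t l) w) l * lin (Dt t l) w))) (at t)"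
    by (rule smax_deriv[OF K]) (rule lin_Ct_deriv)+
  then show ?thesis unfolding Z_def by (rule DERIV_isCont)
qed

lemma lin_Dt_cont: "isCont (\<lambda>t. lin (Dt t k) w) t"
  unfolding lin_def Dt_def by (intro continuous_intros)

lemma Dfun_cont: "isCont (\<lambda>t. Dfun t w) t"
  unfolding Dfun_def
  by (intro continuous_sum continuous_mult continuous_const smax_cont_t lin_Dt_cont)

lemma FTC_H: "H (pi/2) w - H 0 w = (\<integral>t. Dfun t w * indicator {0..pi/2} t \<partial>lborel)"
  by (rule integral_FTC_Icc_real[symmetric]) (use H_deriv Dfun_cont in auto)

definition "Bw w = b * (\<Sum>k\<in>K. \<Sum>a\<in>UNIV. (\<bar>P k a\<bar> + \<bar>Q k a\<bar>) * \<bar>w a\<bar>)"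

lemma Dfun_bound: "\<bar>Dfun t w\<bar> \<le> Bw w"
proof -
  have "\<bar>Dfun t w\<bar> \<le> (\<Sum>k\<in>K. \<bar>smax K b (Z t w) k * (b * lin (Dt t k) w)\<bar>)"
    unfolding Dfun_def by (rule sum_abs)
  also have "\<dots> \<le> (\<Sum>k\<in>K. b * (\<Sum>a\<in>UNIV. (\<bar>P k a\<bar> + \<bar>Q k a\<bar>) * \<bar>w a\<bar>))"
  proof (rule sum_mono)
    fix k assume k: "k \<in> K"
    have "\<bar>lin (Dt t k) w\<bar> \<le> (\<Sum>a\<in>UNIV. \<bar>Dt t k a * w a\<bar>)"
      unfolding lin_def by (rule sum_abs)
    also have "\<dots> \<le> (\<Sum>a\<in>UNIV. (\<bar>P k a\<bar> + \<bar>Q k a\<bar>) * \<bar>w a\<bar>)"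
    proof (rule sum_mono)
      fix a
      have "\<bar>Dt t k a\<bar> \<le> \<bar>sin t\<bar> * \<bar>P k a\<bar> + \<bar>cos t\<bar> * \<bar>Q k a\<bar>"
        unfolding Dt_def by (rule order_trans[OF abs_triangle_ineq]) (simp add: abs_mult)
      also have "\<dots> \<le> \<bar>P k a\<bar> + \<bar>Q k a\<bar>"
        by (intro add_mono mult_left_le_one_le) auto
      finally show "\<bar>Dt t k a * w a\<bar> \<le> (\<bar>P k a\<bar> + \<bar>Q k a\<bar>) * \<bar>w a\<bar>"
        by (simp add: abs_mult mult_right_mono)
    qed
    finally have l: "\<bar>lin (Dt t k) w\<bar> \<le> (\<Sum>a\<in>UNIV. (\<bar>P k a\<bar> + \<bar>Q k a\<bar>) * \<bar>w a\<bar>)" .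
    have "\<bar>smax K b (Z t w) k * (b * lin (Dt t k) w)\<bar> = \<bar>smax K b (Z t w) k\<bar> * (b * \<bar>lin (Dt t k) w\<bar>)"
      using b by (simp add: abs_mult)
    also have "\<dots> \<le> 1 * (b * (\<Sum>a\<in>UNIV. (\<bar>P k a\<bar> + \<bar>Q k a\<bar>) * \<bar>w a\<bar>))"
      using smax_abs[OF k] l b by (intro mult_mono mult_left_mono) auto
    finally show "\<bar>smax K b (Z t w) k * (b * lin (Dt t k) w)\<bar> \<le> b * (\<Sum>a\<in>UNIV. (\<bar>P k a\<bar> + \<bar>Q k a\<bar>) * \<bar>w a\<bar>)"
      by simp
  qed
  also have "\<dots> = Bw w" unfolding Bw_def by (simp add: sum_distrib_left)
  finally show ?thesis .
qed

lemma Bw_nonneg: "0 \<le> Bw w"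
  unfolding Bw_def using b by (intro mult_nonneg_nonneg sum_nonneg) auto

lemma meas_Bw[measurable]: "Bw \<in> borel_measurable (PG s)"
  unfolding Bw_def by measurable

lemma integrable_Bw: "integrable (PG s) Bw"
  unfolding Bw_def
  by (intro integrable_mult_right Bochner_Integration.integrable_sum integrable_mult_right integrable_abs_comp[OF s])

lemma meas_Dfun_pair[measurable]: "(\<lambda>p. Dfun (fst p) (snd p)) \<in> borel_measurable (lborel \<Otimes>\<^sub>M PG s)"
  unfolding Dfun_def smax_def Z_def lin_def Ct_def Dt_def by measurable

lemma meas_Dfun[measurable]: "Dfun t \<in> borel_measurable (PG s)"
  unfolding Dfun_def smax_def Z_def lin_def Ct_def Dt_def by measurable

lemma integrable_pair:
  "integrable (lborel \<Otimes>\<^sub>M PG s) (\<lambda>p. Dfun (fst p) (snd p) * indicator {0..pi/2} (fst p))"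
proof -
  interpret P: prob_space "PG s" by (rule prob_PG[OF s])
  interpret pair_sigma_finite lborel "PG s"
    unfolding pair_sigma_finite_def using P.sigma_finite_measure_axioms sigma_finite_lborel by simp
  let ?G = "\<lambda>p. indicator {0..pi/2} (fst p) * Bw (snd p)"
  have Gint: "integrable (lborel \<Otimes>\<^sub>M PG s) ?G"
  proof (rule Fubini_integrable)
    show "?G \<in> borel_measurable (lborel \<Otimes>\<^sub>M PG s)" by measurable
    have "(\<lambda>x. \<integral>y. norm (?G (x, y)) \<partial>PG s) = (\<lambda>x. indicator {0..pi/2} x * (\<integral>y. Bw y \<partial>PG s))"
      using Bw_nonneg by (auto simp: abs_mult indicator_def)
    moreover have "integrable lborel (\<lambda>x. indicator {0..pi/2} x * (\<integral>y. Bw y \<partial>PG s))"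
      by (intro integrable_mult_left integrable_real_indicator) auto
    ultimately show "integrable lborel (\<lambda>x. \<integral>y. norm (?G (x, y)) \<partial>PG s)" by simp
    show "AE x in lborel. integrable (PG s) (\<lambda>y. ?G (x, y))"
      using integrable_Bw by (auto intro!: AE_I2 integrable_mult_right)
  qed
  show ?thesis
  proof (rule Bochner_Integration.integrable_bound[OF Gint])
    show "(\<lambda>p. Dfun (fst p) (snd p) * indicator {0..pi/2} (fst p)) \<in> borel_measurable (lborel \<Otimes>\<^sub>M PG s)"
      by measurable
    show "AE p in lborel \<Otimes>\<^sub>M PG s. norm (Dfun (fst p) (snd p) * indicator {0..pi/2} (fst p)) \<le> norm (?G p)"
      using Dfun_bound Bw_nonneg by (auto intro!: AE_I2 simp: indicator_def)
  qed
qed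

lemma integrable_lse:
  "integrable (PG s) (\<lambda>w. lse K b (\<lambda>k. lin (c k) w))"
proof (rule Bochner_Integration.integrable_bound[where f="\<lambda>w. ln (card K) + b * (\<Sum>k\<in>K. \<Sum>a\<in>UNIV. \<bar>c k a\<bar> * \<bar>w a\<bar>)"])
  show "integrable (PG s) (\<lambda>w. ln (card K) + b * (\<Sum>k\<in>K. \<Sum>a\<in>UNIV. \<bar>c k a\<bar> * \<bar>w a\<bar>))"
  proof -
    interpret P: prob_space "PG s" by (rule prob_PG[OF s])
    show ?thesis
      by (intro Bochner_Integration.integrable_add integrable_mult_right Bochner_Integration.integrable_sum
          integrable_abs_comp[OF s] P.integrable_const)
  qed
  show "(\<lambda>w. lse K b (\<lambda>k. lin (c k) w)) \<in> borel_measurable (PG s)"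
    unfolding lse_def by measurable
  show "AE w in PG s. norm (lse K b (\<lambda>k. lin (c k) w)) \<le> norm (ln (card K) + b * (\<Sum>k\<in>K. \<Sum>a\<in>UNIV. \<bar>c k a\<bar> * \<bar>w a\<bar>))"
  proof (intro AE_I2)
    fix w
    have "\<bar>lse K b (\<lambda>k. lin (c k) w)\<bar> \<le> ln (card K) + b * (\<Sum>k\<in>K. \<bar>lin (c k) w\<bar>)"
      using lse_abs[OF K, of b] b by simp
    also have "\<dots> \<le> ln (card K) + b * (\<Sum>k\<in>K. \<Sum>a\<in>UNIV. \<bar>c k a\<bar> * \<bar>w a\<bar>)"
      using b unfolding lin_def
      by (intro add_left_mono mult_left_mono sum_mono order_trans[OF sum_abs]) (auto simp: abs_mult)
    finally show "norm (lse K b (\<lambda>k. lin (c k) w)) \<le> norm (ln (card K) + b * (\<Sum>k\<in>K. \<Sum>a\<in>UNIV. \<bar>c k a\<bar> * \<bar>w a\<bar>))"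
      by simp
  qed
qed

theorem SF_lse:
  "(\<integral>w. lse K b (\<lambda>k. lin (P k) w) \<partial>PG s) \<le> (\<integral>w. lse K b (\<lambda>k. lin (Q k) w) \<partial>PG s)"
proof -
  interpret P: prob_space "PG s" by (rule prob_PG[OF s])
  interpret pair_sigma_finite lborel "PG s"
    unfolding pair_sigma_finite_def using P.sigma_finite_measure_axioms sigma_finite_lborel by simp
  have H0: "H 0 w = lse K b (\<lambda>k. lin (P k) w)" for w
    unfolding H_def Z_def Ct_def by simp
  have H1: "H (pi/2) w = lse K b (\<lambda>k. lin (Q k) w)" for w
    unfolding H_def Z_def Ct_def by simp
  have "(\<integral>w. lse K b (\<lambda>k. lin (Q k) w) \<partial>PG s) - (\<integral>w. lse K b (\<lambda>k. lin (P k) w) \<partial>PG s)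
      = (\<integral>w. H (pi/2) w - H 0 w \<partial>PG s)"
    unfolding H0 H1 by (rule Bochner_Integration.integral_diff[symmetric]) (rule integrable_lse)+
  also have "\<dots> = (\<integral>w. (\<integral>t. Dfun t w * indicator {0..pi/2} t \<partial>lborel) \<partial>PG s)"
    by (simp add: FTC_H)
  also have "\<dots> = (\<integral>t. (\<integral>w. Dfun t w * indicator {0..pi/2} t \<partial>PG s) \<partial>lborel)"
    by (rule Fubini_integral) (use integrable_pair in \<open>simp add: case_prod_beta'\<close>)
  also have "0 \<le> \<dots>"
  proof (rule Bochner_Integration.integral_nonneg)
    fix t
    show "0 \<le> (\<integral>w. Dfun t w * indicator {0..pi/2} t \<partial>PG s)"
      using Dint_nonneg[of t] by (auto simp: indicator_def)
  qed
  finally show ?thesis by simp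
qed

end

lemma net_exists:
  fixes e :: real
  assumes e: "0 < e"
  obtains N :: "('a::euclidean_space) set" where "finite N" "N \<subseteq> sphere 0 1" "N \<noteq> {}"
    "\<And>x. x \<in> sphere 0 1 \<Longrightarrow> \<exists>u\<in>N. norm (x - u) \<le> e"
proof -
  have "\<exists>k. finite k \<and> k \<subseteq> sphere (0::'a) 1 \<and> sphere 0 1 \<subseteq> (\<Union>x\<in>k. ball x e)"
    using seq_compact_imp_totally_bounded[OF compact_imp_seq_compact[OF compact_sphere]] e by blast
  then obtain k where k: "finite k" "k \<subseteq> sphere (0::'a) 1" "sphere 0 1 \<subseteq> (\<Union>x\<in>k. ball x e)" by blast
  have ne: "sphere (0::'a) 1 \<noteq> {}" by (simp add: sphere_def) (metis norm_Basis SOME_Basis)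
  have "k \<noteq> {}" using k(3) ne by auto
  moreover have "\<exists>u\<in>k. norm (x - u) \<le> e" if x: "x \<in> sphere 0 1" for x
  proof -
    obtain u where "u \<in> k" "x \<in> ball u e" using k(3) x by blast
    then show ?thesis by (intro bexI[of _ u]) (auto simp: dist_norm norm_minus_commute)
  qed
  ultimately show ?thesis using that k by blast
qed

lemma net_bound:
  fixes G :: "real^'n^'m" and e :: real
  assumes Nu: "finite Nu" "Nu \<subseteq> sphere 0 1" "Nu \<noteq> {}" "\<And>x. x \<in> sphere 0 1 \<Longrightarrow> \<exists>u\<in>Nu. norm (x - u) \<le> e"
    and Nv: "finite Nv" "Nv \<subseteq> sphere 0 1" "Nv \<noteq> {}" "\<And>x. x \<in> sphere 0 1 \<Longrightarrow> \<exists>v\<in>Nv. norm (x - v) \<le> e"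
    and sym: "\<And>v. v \<in> Nv \<Longrightarrow> - v \<in> Nv"
  shows "\<exists>k\<in>Nu \<times> Nv. (1 - 2 * e) * onorm (\<lambda>x. G *v x) \<le> snd k \<bullet> (G *v fst k)"
proof -
  let ?L = "onorm (\<lambda>x. G *v x)"
  let ?K = "Nu \<times> Nv"
  let ?f = "\<lambda>k. snd k \<bullet> (G *v fst k)"
  define M where "M = Max (?f ` ?K)"
  have finK: "finite (?f ` ?K)" using Nu Nv by auto
  have neK: "?f ` ?K \<noteq> {}" using Nu Nv by auto
  have Mge: "?f k \<le> M" if "k \<in> ?K" for k
    unfolding M_def using finK that by (intro Max_ge) auto
  obtain k0 where k0: "k0 \<in> ?K" "?f k0 = M"
    unfolding M_def using Max_in[OF finK neK] by auto
  have bl: "bounded_linear (\<lambda>x. G *v x)" by simp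
  have Gx: "norm (G *v x) \<le> ?L * norm x" for x using onorm[OF bl] .
  have L0: "0 \<le> ?L" using onorm_pos_le[OF bl] .
  have M0: "0 \<le> M"
  proof -
    obtain u v where uv: "u \<in> Nu" "v \<in> Nv" using Nu Nv by auto
    have "?f (u, v) \<le> M" by (rule Mge) (use uv in auto)
    moreover have "?f (u, -v) \<le> M" by (rule Mge) (use uv sym in auto)
    ultimately show ?thesis by simp
  qed
  have e0: "0 \<le> e"
  proof -
    obtain u where u: "u \<in> Nu" using Nu by auto
    then have "u \<in> sphere 0 1" using Nu by auto
    then obtain u' where "norm (u - u') \<le> e" using Nu(4) by blast
    then show ?thesis by (meson norm_ge_zero order_trans)
  qed
  have unit: "norm (G *v x) \<le> M + 2 * e * ?L" if x: "norm x = 1" for x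
  proof (cases "G *v x = 0")
    case True then show ?thesis using M0 L0 e0 by simp
  next
    case False
    define y where "y = (1 / norm (G *v x)) *\<^sub>R (G *v x)"
    have ny: "norm y = 1" using False unfolding y_def by simp
    obtain u where u: "u \<in> Nu" "norm (x - u) \<le> e" using Nu(4)[of x] x by auto
    obtain v where v: "v \<in> Nv" "norm (y - v) \<le> e" using Nv(4)[of y] ny by auto
    have nv: "norm v = 1" using v Nv(2) by auto
    have yGx: "y \<bullet> (G *v x) = norm (G *v x)"
      unfolding y_def using False by (simp add: dot_square_norm power2_eq_square)
    have dec: "v \<bullet> (G *v u) = y \<bullet> (G *v x) - (y - v) \<bullet> (G *v x) - v \<bullet> (G *v (x - u))"
      by (simp add: matrix_vector_mult_diff_distrib inner_diff_left inner_diff_right)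
    have t1: "(y - v) \<bullet> (G *v x) \<le> e * ?L"
    proof -
      have "(y - v) \<bullet> (G *v x) \<le> norm (y - v) * norm (G *v x)" by (rule norm_cauchy_schwarz)
      also have "\<dots> \<le> e * ?L"
        using v(2) Gx[of x] x e0 by (intro mult_mono) auto
      finally show ?thesis .
    qed
    have t2: "v \<bullet> (G *v (x - u)) \<le> e * ?L"
    proof -
      have "v \<bullet> (G *v (x - u)) \<le> norm v * norm (G *v (x - u))" by (rule norm_cauchy_schwarz)
      also have "\<dots> \<le> ?L * norm (x - u)" using nv Gx[of "x - u"] by simp
      also have "\<dots> \<le> ?L * e" using u(2) L0 by (intro mult_left_mono) auto
      finally show ?thesis by (simp add: mult.commute)
    qed
    have "norm (G *v x) \<le> v \<bullet> (G *v u) + 2 * e * ?L"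
      using dec yGx t1 t2 by linarith
    also have "v \<bullet> (G *v u) \<le> M" using Mge[of "(u, v)"] u v by auto
    finally show ?thesis by simp
  qed
  have "?L \<le> M + 2 * e * ?L"
  proof (rule onorm_le)
    fix x :: "real^'n"
    show "norm (G *v x) \<le> (M + 2 * e * ?L) * norm x"
    proof (cases "x = 0")
      case True then show ?thesis by simp
    next
      case False
      have "norm (G *v ((1 / norm x) *\<^sub>R x)) \<le> M + 2 * e * ?L"
        using False by (intro unit) simp
      then have "norm (G *v x) / norm x \<le> M + 2 * e * ?L"
        by (simp add: matrix_vector_mult_scaleR)
      then show ?thesis using False by (simp add: divide_le_eq mult.commute)
    qed
  qed
  then have "(1 - 2 * e) * ?L \<le> ?f k0" using k0 by (simp add: algebra_simps)
  then show ?thesis using k0 by blast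
qed

lemma sum_UNIV_D:
  fixes f :: "('m::finite \<times> 'n::finite) + ('n + 'm) \<Rightarrow> real"
  shows "(\<Sum>a\<in>UNIV. f a) = (\<Sum>i\<in>UNIV. \<Sum>j\<in>UNIV. f (Inl (i, j))) + (\<Sum>j\<in>UNIV. f (Inr (Inl j))) + (\<Sum>i\<in>UNIV. f (Inr (Inr i)))"
proof -
  have "(\<Sum>a\<in>UNIV. f a) = (\<Sum>a\<in>(UNIV::('m \<times> 'n) set) <+> (UNIV::('n + 'm) set). f a)" by (simp only: UNIV_Plus_UNIV)
  also have "\<dots> = sum (f \<circ> Inl) UNIV + sum (f \<circ> Inr) UNIV" by (rule sum.Plus) auto
  also have "\<dots> = (\<Sum>x\<in>UNIV. f (Inl x)) + (\<Sum>y\<in>UNIV. f (Inr y))" by (simp add: comp_def)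
  also have "(\<Sum>y\<in>UNIV. f (Inr y)) = (\<Sum>y\<in>(UNIV::'n set) <+> (UNIV::'m set). f (Inr y))" by (simp only: UNIV_Plus_UNIV)
  also have "\<dots> = sum ((\<lambda>y. f (Inr y)) \<circ> Inl) UNIV + sum ((\<lambda>y. f (Inr y)) \<circ> Inr) UNIV" by (rule sum.Plus) auto
  also have "\<dots> = (\<Sum>j\<in>UNIV. f (Inr (Inl j))) + (\<Sum>i\<in>UNIV. f (Inr (Inr i)))" by (simp add: comp_def)
  also have "(\<Sum>x\<in>UNIV. f (Inl x)) = (\<Sum>i\<in>UNIV. \<Sum>j\<in>UNIV. f (Inl (i, j)))"
    by (simp add: sum.cartesian_product UNIV_Times_UNIV[symmetric] del: UNIV_Times_UNIV)
  finally show ?thesis by simp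
qed

definition PP :: "((real^'n) \<times> (real^'m)) \<Rightarrow> ('m::finite \<times> 'n::finite) + ('n + 'm) \<Rightarrow> real" where
  "PP k a = (case a of Inl (i, j) \<Rightarrow> snd k $ i * fst k $ j | Inr _ \<Rightarrow> 0)"

definition QQ :: "((real^'n) \<times> (real^'m)) \<Rightarrow> ('m::finite \<times> 'n::finite) + ('n + 'm) \<Rightarrow> real" where
  "QQ k a = (case a of Inl _ \<Rightarrow> 0 | Inr (Inl j) \<Rightarrow> fst k $ j | Inr (Inr i) \<Rightarrow> snd k $ i)"

lemma PP_PP: "(\<Sum>a\<in>UNIV. PP k a * PP l a) = (snd k \<bullet> snd l) * (fst k \<bullet> fst l)"
  unfolding sum_UNIV_D PP_def inner_vec_def
  apply (simp add: sum_distrib_left sum_distrib_right mult_ac)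
  apply (rule sum.swap)
  done

lemma QQ_QQ: "(\<Sum>a\<in>UNIV. QQ k a * QQ l a) = (fst k \<bullet> fst l) + (snd k \<bullet> snd l)"
  unfolding sum_UNIV_D QQ_def inner_vec_def by simp

lemma PP_QQ: "(\<Sum>a\<in>UNIV. PP k a * QQ l a) = 0"
  unfolding sum_UNIV_D PP_def QQ_def by simp

definition cc :: "((real^'n) \<times> (real^'m)) \<Rightarrow> ('m::finite \<times> 'n::finite) \<Rightarrow> real" where
  "cc k x = snd k $ fst x * fst k $ snd x"

lemma lin_PP: "lin (PP k) w = lin (cc k) (\<lambda>x. w (Inl x))"
  unfolding lin_def sum_UNIV_D PP_def cc_def
  apply (simp add: sum.cartesian_product UNIV_Times_UNIV[symmetric] del: UNIV_Times_UNIV)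
  apply (intro sum.cong)
  apply auto
  done

lemma lin_cc: "lin (cc k) G = snd k \<bullet> (to_matrix G *v fst k)"
  unfolding lin_def cc_def to_matrix_def inner_vec_def matrix_vector_mult_def
  apply (simp add: sum.cartesian_product UNIV_Times_UNIV[symmetric] sum_distrib_left mult_ac del: UNIV_Times_UNIV)
  apply (intro sum.cong)
  apply auto
  done

definition gv :: "(('m::finite \<times> 'n::finite) + ('n + 'm) \<Rightarrow> real) \<Rightarrow> real^'n" where
  "gv w = (\<chi> j. w (Inr (Inl j)))"
definition hv :: "(('m::finite \<times> 'n::finite) + ('n + 'm) \<Rightarrow> real) \<Rightarrow> real^'m" where
  "hv w = (\<chi> i. w (Inr (Inr i)))"

lemma lin_QQ: "lin (QQ k) w = fst k \<bullet> gv w + snd k \<bullet> hv w"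
  unfolding lin_def sum_UNIV_D QQ_def gv_def hv_def inner_vec_def by simp

lemma interp_gordon:
  fixes Nu :: "(real^'n::finite) set" and Nv :: "(real^'m::finite) set"
  assumes s: "0 < s" and b: "0 < b"
    and Nu: "finite Nu" "Nu \<subseteq> sphere 0 1" "Nu \<noteq> {}"
    and Nv: "finite Nv" "Nv \<subseteq> sphere 0 1" "Nv \<noteq> {}"
  shows "interp s b (Nu \<times> Nv) (PP :: _ \<Rightarrow> ('m \<times> 'n) + ('n + 'm) \<Rightarrow> real) QQ"
proof
  show "0 < s" "0 < b" by fact+
  show "finite (Nu \<times> Nv)" "Nu \<times> Nv \<noteq> {}" using Nu Nv by auto
  show "\<And>k l. (\<Sum>a\<in>UNIV. PP k a * QQ l a) = 0" by (rule PP_QQ)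
  fix k l assume k: "k \<in> Nu \<times> Nv" and l: "l \<in> Nu \<times> Nv"
  define x where "x = fst k \<bullet> fst l"
  define y where "y = snd k \<bullet> snd l"
  have n1: "norm (fst k) = 1" "norm (fst l) = 1" "norm (snd k) = 1" "norm (snd l) = 1"
    using k l Nu Nv by auto
  have kk: "fst k \<bullet> fst k = 1" "snd k \<bullet> snd k = 1" "fst l \<bullet> fst l = 1" "snd l \<bullet> snd l = 1"
    using n1 by (simp_all add: dot_square_norm)
  have x1: "x \<le> 1" unfolding x_def using norm_cauchy_schwarz[of "fst k" "fst l"] n1 by simp
  have y1: "y \<le> 1" unfolding y_def using norm_cauchy_schwarz[of "snd k" "snd l"] n1 by simp
  have "0 \<le> (1 - x) * (1 - y)" using x1 y1 by (intro mult_nonneg_nonneg) auto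
  then have "1 + 1 - 2 * (y * x) \<le> (1 + 1) + (1 + 1) - 2 * (x + y)"
    by (simp add: algebra_simps)
  then show "(\<Sum>a\<in>UNIV. PP k a * PP k a) + (\<Sum>a\<in>UNIV. PP l a * PP l a) - 2 * (\<Sum>a\<in>UNIV. PP k a * PP l a)
     \<le> (\<Sum>a\<in>UNIV. QQ k a * QQ k a) + (\<Sum>a\<in>UNIV. QQ l a * QQ l a) - 2 * (\<Sum>a\<in>UNIV. QQ k a * QQ l a)"
    unfolding PP_PP QQ_QQ kk x_def[symmetric] y_def[symmetric]
    by (simp add: inner_commute[of "snd l"] inner_commute[of "fst l"] x_def y_def)
qed

lemma norm_le_amgm:
  fixes g :: "'a::real_inner"
  assumes t: "0 < t"
  shows "norm g \<le> ((g \<bullet> g) / t + t) / 2"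
proof -
  have "0 \<le> (norm g - t)\<^sup>2" by simp
  then have "2 * t * norm g \<le> (norm g)\<^sup>2 + t\<^sup>2" by (simp add: power2_eq_square algebra_simps)
  then have "norm g \<le> ((norm g)\<^sup>2 + t\<^sup>2) / (2 * t)" using t by (simp add: field_simps)
  also have "\<dots> = ((g \<bullet> g) / t + t) / 2" using t by (simp add: dot_square_norm field_simps power2_eq_square)
  finally show ?thesis .
qed

lemma gv_sq: "gv w \<bullet> gv w = (\<Sum>j\<in>UNIV. (w (Inr (Inl j)))\<^sup>2)"
  unfolding gv_def inner_vec_def by (simp add: power2_eq_square)

lemma hv_sq: "hv w \<bullet> hv w = (\<Sum>i\<in>UNIV. (w (Inr (Inr i)))\<^sup>2)"
  unfolding hv_def inner_vec_def by (simp add: power2_eq_square)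

lemma integral_sq_sum:
  assumes s: "0 < s"
  shows "(\<integral>w. (\<Sum>j\<in>(UNIV::'j::finite set). (w (f j))\<^sup>2) \<partial>(PG s :: ('d::finite \<Rightarrow> real) measure)) = real CARD('j) * s\<^sup>2"
proof -
  have int: "integrable (PG s :: ('d \<Rightarrow> real) measure) (\<lambda>w. (w a)\<^sup>2)" for a
    using integrable_PG_comp[OF s integrable_NG_sq[OF s], of a] by simp
  have "(\<integral>w. (\<Sum>j\<in>(UNIV::'j set). (w (f j))\<^sup>2) \<partial>(PG s :: ('d \<Rightarrow> real) measure)) = (\<Sum>j\<in>(UNIV::'j set). (\<integral>w. (w (f j))\<^sup>2 \<partial>(PG s :: ('d \<Rightarrow> real) measure)))"
    by (rule Bochner_Integration.integral_sum) (rule int)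
  also have "\<dots> = (\<Sum>j\<in>(UNIV::'j set). s\<^sup>2)"
    by (intro sum.cong refl) (simp add: integral_PG_comp[OF s, of "\<lambda>x. x\<^sup>2"] integral_NG_sq[OF s])
  finally show ?thesis by simp
qed

lemma gordon_Omega:
  fixes Nu :: "(real^'n::finite) set" and Nv :: "(real^'m::finite) set"
  assumes s: "0 < s" and b: "0 < b"
    and Nu: "finite Nu" "Nu \<subseteq> sphere 0 1" "Nu \<noteq> {}"
    and Nv: "finite Nv" "Nv \<subseteq> sphere 0 1" "Nv \<noteq> {}"
  shows "(\<integral>w. lse (Nu \<times> Nv) b (\<lambda>k. lin (PP k) w) \<partial>(PG s :: (('m \<times> 'n) + ('n + 'm) \<Rightarrow> real) measure))
     \<le> ln (card (Nu \<times> Nv)) + b * (s * sqrt CARD('n) + s * sqrt CARD('m))"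
proof -
  let ?K = "Nu \<times> Nv"
  let ?O = "PG s :: (('m \<times> 'n) + ('n + 'm) \<Rightarrow> real) measure"
  interpret I: interp s b ?K "PP :: _ \<Rightarrow> ('m \<times> 'n) + ('n + 'm) \<Rightarrow> real" QQ
    by (rule interp_gordon[OF s b Nu Nv])
  interpret P: prob_space ?O by (rule prob_PG[OF s])
  define tn where "tn = s * sqrt CARD('n)"
  define tm where "tm = s * sqrt CARD('m)"
  have tn: "0 < tn" and tm: "0 < tm" unfolding tn_def tm_def using s by auto
  define R where "R w = ln (card ?K) + b * (((\<Sum>j\<in>UNIV. (w (Inr (Inl j)))\<^sup>2) / tn + tn) / 2
      + ((\<Sum>i\<in>UNIV. (w (Inr (Inr i)))\<^sup>2) / tm + tm) / 2)" for w :: "('m \<times> 'n) + ('n + 'm) \<Rightarrow> real"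
  have pw: "lse ?K b (\<lambda>k. lin (QQ k) w) \<le> R w" for w
  proof -
    have "lse ?K b (\<lambda>k. lin (QQ k) w) \<le> ln (card ?K) + b * (norm (gv w) + norm (hv w))"
    proof (rule lse_le)
      show "finite ?K" "?K \<noteq> {}" using Nu Nv by auto
      show "0 \<le> b" using b by simp
      fix k assume k: "k \<in> ?K"
      have n1: "norm (fst k) = 1" "norm (snd k) = 1" using k Nu Nv by auto
      show "lin (QQ k) w \<le> norm (gv w) + norm (hv w)"
        unfolding lin_QQ using norm_cauchy_schwarz[of "fst k" "gv w"] norm_cauchy_schwarz[of "snd k" "hv w"] n1
        by simp
    qed
    also have "\<dots> \<le> R w"
      unfolding R_def using norm_le_amgm[OF tn, of "gv w"] norm_le_amgm[OF tm, of "hv w"] b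
      unfolding gv_sq hv_sq by (intro add_left_mono mult_left_mono add_mono) auto
    finally show ?thesis .
  qed
  have intR: "integrable ?O R"
    unfolding R_def
    by (intro Bochner_Integration.integrable_add integrable_mult_right integrable_divide
        Bochner_Integration.integrable_sum P.integrable_const
        integrable_PG_comp[OF s integrable_NG_sq[OF s], unfolded power2_eq_square]
        | simp add: power2_eq_square)+
  have intR': "(\<integral>w. R w \<partial>?O) = ln (card ?K) + b * ((real CARD('n) * s\<^sup>2 / tn + tn) / 2 + (real CARD('m) * s\<^sup>2 / tm + tm) / 2)"
  proof -
    have i1: "integrable ?O (\<lambda>w. (\<Sum>j\<in>UNIV. (w (Inr (Inl j)))\<^sup>2))"
      by (intro Bochner_Integration.integrable_sum) (use integrable_PG_comp[OF s integrable_NG_sq[OF s]] in auto)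
    have i2: "integrable ?O (\<lambda>w. (\<Sum>i\<in>UNIV. (w (Inr (Inr i)))\<^sup>2))"
      by (intro Bochner_Integration.integrable_sum) (use integrable_PG_comp[OF s integrable_NG_sq[OF s]] in auto)
    show ?thesis
      unfolding R_def using i1 i2
      by (simp add: integral_sq_sum[OF s, of "\<lambda>j. Inr (Inl j)"] integral_sq_sum[OF s, of "\<lambda>i. Inr (Inr i)"] P.prob_space)
  qed
  have e1: "real CARD('n) * s\<^sup>2 / tn = tn" unfolding tn_def using s
    by (simp add: power2_eq_square field_simps)
  have e2: "real CARD('m) * s\<^sup>2 / tm = tm" unfolding tm_def using s
    by (simp add: power2_eq_square field_simps)
  have "(\<integral>w. lse ?K b (\<lambda>k. lin (PP k) w) \<partial>?O) \<le> (\<integral>w. lse ?K b (\<lambda>k. lin (QQ k) w) \<partial>?O)"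
    by (rule I.SF_lse)
  also have "\<dots> \<le> (\<integral>w. R w \<partial>?O)"
    by (rule integral_mono[OF I.integrable_lse intR pw])
  also have "\<dots> = ln (card ?K) + b * (tn + tm)" unfolding intR' e1 e2 by simp
  finally show ?thesis unfolding tn_def tm_def .
qed

lemma transfer_Inl:
  fixes f :: "('m::finite \<times> 'n::finite \<Rightarrow> real) \<Rightarrow> real"
  assumes s: "0 < s" and fm: "f \<in> borel_measurable (PG s :: ('m \<times> 'n \<Rightarrow> real) measure)"
  shows "(\<integral>w. f (\<lambda>x. w (Inl x)) \<partial>(PG s :: (('m \<times> 'n) + ('n + 'm) \<Rightarrow> real) measure))
       = (\<integral>G. f G \<partial>(PG s :: ('m \<times> 'n \<Rightarrow> real) measure))"
proof -
  let ?O = "PG s :: (('m \<times> 'n) + ('n + 'm) \<Rightarrow> real) measure"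
  let ?G = "PG s :: ('m \<times> 'n \<Rightarrow> real) measure"
  have d: "distr ?O ?G (\<lambda>\<omega>. \<lambda>n\<in>UNIV. \<omega> (Inl n)) = ?G"
    using distr_PiM_reindex[of UNIV "\<lambda>_. NG s" Inl UNIV] prob_NG[OF s] by simp
  have T: "(\<lambda>\<omega>. \<lambda>n\<in>UNIV. \<omega> (Inl n)) \<in> measurable ?O ?G"
    by measurable
  have "(\<integral>G. f G \<partial>?G) = (\<integral>G. f G \<partial>distr ?O ?G (\<lambda>\<omega>. \<lambda>n\<in>UNIV. \<omega> (Inl n)))"
    using d by simp
  also have "\<dots> = (\<integral>w. f (\<lambda>n\<in>UNIV. w (Inl n)) \<partial>?O)"
    by (rule integral_distr[OF T fm])
  also have "(\<lambda>w. f (\<lambda>n\<in>UNIV. w (Inl n))) = (\<lambda>w. f (\<lambda>x. w (Inl x)))"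
    by (simp add: restrict_def)
  finally show ?thesis by simp
qed

lemma integrable_lse_gen:
  assumes s: "0 < s" and b: "0 < b" and K: "finite K" "K \<noteq> {}"
  shows "integrable (PG s :: ('d::finite \<Rightarrow> real) measure) (\<lambda>w. lse K b (\<lambda>k. lin (c k) w))"
proof (rule Bochner_Integration.integrable_bound[where f="\<lambda>w. ln (card K) + b * (\<Sum>k\<in>K. \<Sum>a\<in>UNIV. \<bar>c k a\<bar> * \<bar>w a\<bar>)"])
  show "integrable (PG s :: ('d \<Rightarrow> real) measure) (\<lambda>w. ln (card K) + b * (\<Sum>k\<in>K. \<Sum>a\<in>UNIV. \<bar>c k a\<bar> * \<bar>w a\<bar>))"
  proof -
    interpret P: prob_space "PG s :: ('d \<Rightarrow> real) measure" by (rule prob_PG[OF s])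
    show ?thesis
      by (intro Bochner_Integration.integrable_add integrable_mult_right Bochner_Integration.integrable_sum
          integrable_abs_comp[OF s] P.integrable_const)
  qed
  show "(\<lambda>w. lse K b (\<lambda>k. lin (c k) w)) \<in> borel_measurable (PG s :: ('d \<Rightarrow> real) measure)"
    unfolding lse_def by measurable
  show "AE w in (PG s :: ('d \<Rightarrow> real) measure). norm (lse K b (\<lambda>k. lin (c k) w)) \<le> norm (ln (card K) + b * (\<Sum>k\<in>K. \<Sum>a\<in>UNIV. \<bar>c k a\<bar> * \<bar>w a\<bar>))"
  proof (intro AE_I2)
    fix w :: "'d \<Rightarrow> real"
    have "\<bar>lse K b (\<lambda>k. lin (c k) w)\<bar> \<le> ln (card K) + b * (\<Sum>k\<in>K. \<bar>lin (c k) w\<bar>)"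
      using lse_abs[OF K, of b] b by simp
    also have "\<dots> \<le> ln (card K) + b * (\<Sum>k\<in>K. \<Sum>a\<in>UNIV. \<bar>c k a\<bar> * \<bar>w a\<bar>)"
      using b unfolding lin_def
      by (intro add_left_mono mult_left_mono sum_mono order_trans[OF sum_abs]) (auto simp: abs_mult)
    finally show "norm (lse K b (\<lambda>k. lin (c k) w)) \<le> norm (ln (card K) + b * (\<Sum>k\<in>K. \<Sum>a\<in>UNIV. \<bar>c k a\<bar> * \<bar>w a\<bar>))"
      by simp
  qed
qed

lemma gordon_G:
  fixes Nu :: "(real^'n::finite) set" and Nv :: "(real^'m::finite) set"
  assumes s: "0 < s" and b: "0 < b"
    and Nu: "finite Nu" "Nu \<subseteq> sphere 0 1" "Nu \<noteq> {}"
    and Nv: "finite Nv" "Nv \<subseteq> sphere 0 1" "Nv \<noteq> {}"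
  shows "(\<integral>G. lse (Nu \<times> Nv) b (\<lambda>k. lin (cc k) G) \<partial>(PG s :: ('m \<times> 'n \<Rightarrow> real) measure))
     \<le> ln (card (Nu \<times> Nv)) + b * (s * sqrt CARD('n) + s * sqrt CARD('m))"
proof -
  have "(\<integral>G. lse (Nu \<times> Nv) b (\<lambda>k. lin (cc k) G) \<partial>(PG s :: ('m \<times> 'n \<Rightarrow> real) measure))
      = (\<integral>w. lse (Nu \<times> Nv) b (\<lambda>k. lin (cc k) (\<lambda>x. w (Inl x))) \<partial>(PG s :: (('m \<times> 'n) + ('n + 'm) \<Rightarrow> real) measure))"
    by (rule transfer_Inl[OF s, symmetric]) (unfold lse_def, measurable)
  also have "\<dots> = (\<integral>w. lse (Nu \<times> Nv) b (\<lambda>k. lin (PP k) w) \<partial>(PG s :: (('m \<times> 'n) + ('n + 'm) \<Rightarrow> real) measure))"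
    by (simp add: lin_PP)
  also have "\<dots> \<le> ln (card (Nu \<times> Nv)) + b * (s * sqrt CARD('n) + s * sqrt CARD('m))"
    by (rule gordon_Omega[OF s b Nu Nv])
  finally show ?thesis .
qed

lemma pointwise_G:
  fixes Nu :: "(real^'n::finite) set" and Nv :: "(real^'m::finite) set" and G :: "'m \<times> 'n \<Rightarrow> real"
  assumes b: "0 < b"
    and Nu: "finite Nu" "Nu \<subseteq> sphere 0 1" "Nu \<noteq> {}" "\<And>x. x \<in> sphere 0 1 \<Longrightarrow> \<exists>u\<in>Nu. norm (x - u) \<le> e"
    and Nv: "finite Nv" "Nv \<subseteq> sphere 0 1" "Nv \<noteq> {}" "\<And>x. x \<in> sphere 0 1 \<Longrightarrow> \<exists>v\<in>Nv. norm (x - v) \<le> e"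
    and sym: "\<And>v. v \<in> Nv \<Longrightarrow> - v \<in> Nv"
  shows "(1 - 2 * e) * b * spectral_norm (to_matrix G) \<le> lse (Nu \<times> Nv) b (\<lambda>k. lin (cc k) G)"
proof -
  obtain k where k: "k \<in> Nu \<times> Nv" "(1 - 2 * e) * onorm (\<lambda>x. to_matrix G *v x) \<le> snd k \<bullet> (to_matrix G *v fst k)"
    using net_bound[OF Nu Nv sym, of "to_matrix G"] by blast
  have "(1 - 2 * e) * b * spectral_norm (to_matrix G) \<le> b * lin (cc k) G"
    using k(2) b unfolding spectral_norm_def lin_cc by (simp add: mult_ac mult_left_mono)
  also have "\<dots> \<le> lse (Nu \<times> Nv) b (\<lambda>k. lin (cc k) G)"
    by (rule lse_ge[where x="\<lambda>k. lin (cc k) G"]) (use Nu Nv k in auto)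
  finally show ?thesis .
qed

lemma ln_tangent:
  fixes y z :: real
  assumes "0 < y" "0 < z"
  shows "ln y \<le> ln z + (y - z) / z"
proof -
  have "ln (y / z) \<le> y / z - 1" using assms by (intro ln_le_minus_one) auto
  then show ?thesis using assms by (simp add: ln_div diff_divide_distrib)
qed

lemma spectral_norm_nonneg: "0 \<le> spectral_norm (A :: real^'n^'m)"
  unfolding spectral_norm_def by (rule onorm_pos_le) simp

lemma spectral_norm_add: "spectral_norm (A + B :: real^'n^'m) \<le> spectral_norm A + spectral_norm B"
  unfolding spectral_norm_def matrix_vector_mult_add_rdistrib
  by (rule onorm_triangle) simp_all

lemma key_bound:
  fixes Abar :: "real^'n::finite^'m::finite" and \<sigma> :: real
    and Nu :: "(real^'n) set" and Nv :: "(real^'m) set"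
  assumes A: "spectral_norm Abar \<le> 1" and \<sigma>: "0 < \<sigma>" and b: "0 < b"
    and e: "0 < e" "e \<le> 1/4"
    and Nu: "finite Nu" "Nu \<subseteq> sphere 0 1" "Nu \<noteq> {}" "\<And>x. x \<in> sphere 0 1 \<Longrightarrow> \<exists>u\<in>Nu. norm (x - u) \<le> e"
    and Nv: "finite Nv" "Nv \<subseteq> sphere 0 1" "Nv \<noteq> {}" "\<And>x. x \<in> sphere 0 1 \<Longrightarrow> \<exists>v\<in>Nv. norm (x - v) \<le> e"
    and sym: "\<And>v. v \<in> Nv \<Longrightarrow> - v \<in> Nv"
  defines "c0 \<equiv> (sqrt (real CARD('n)) + sqrt (real CARD('m))) * \<sigma>"
  shows "(\<integral>\<^sup>+ g. ennreal (ln (spectral_norm (Abar + to_matrix g) + 3))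
            \<partial>(gaussian_noise \<sigma> :: ('m \<times> 'n \<Rightarrow> real) measure))
         \<le> ennreal (ln (c0 + 4) + ((ln (card (Nu \<times> Nv)) / b + c0) / (1 - 2 * e) - c0) / (c0 + 4))"
proof -
  let ?K = "Nu \<times> Nv"
  let ?M = "PG \<sigma> :: ('m \<times> 'n \<Rightarrow> real) measure"
  define X where "X G = lse ?K b (\<lambda>k. lin (cc k) G)" for G
  define \<gamma> where "\<gamma> = 1 / ((c0 + 4) * (1 - 2 * e) * b)"
  define \<alpha> where "\<alpha> = ln (c0 + 4) - c0 / (c0 + 4)"
  have c0: "0 \<le> c0" unfolding c0_def using \<sigma> by simp
  have e2: "0 < 1 - 2 * e" using e by simp
  have \<gamma>0: "0 < \<gamma>" unfolding \<gamma>_def using c0 e2 b by simp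
  have K: "finite ?K" "?K \<noteq> {}" using Nu Nv by auto
  have pw: "ln (spectral_norm (Abar + to_matrix G) + 3) \<le> \<alpha> + \<gamma> * X G" for G
  proof -
    let ?N = "spectral_norm (to_matrix G)"
    have N0: "0 \<le> ?N" by (rule spectral_norm_nonneg)
    have "(1 - 2 * e) * b * ?N \<le> X G"
      unfolding X_def by (rule pointwise_G[OF b Nu Nv sym])
    then have NX: "?N \<le> X G / ((1 - 2 * e) * b)"
      using e2 b by (simp add: field_simps mult_ac)
    have "spectral_norm (Abar + to_matrix G) + 3 \<le> ?N + 4"
      using spectral_norm_add[of Abar "to_matrix G"] A by linarith
    then have "ln (spectral_norm (Abar + to_matrix G) + 3) \<le> ln (?N + 4)"
      using spectral_norm_nonneg[of "Abar + to_matrix G"] by (subst ln_le_cancel_iff) auto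
    also have "\<dots> \<le> ln (c0 + 4) + ((?N + 4) - (c0 + 4)) / (c0 + 4)"
      using N0 c0 by (intro ln_tangent) auto
    also have "\<dots> \<le> ln (c0 + 4) + (X G / ((1 - 2 * e) * b) - c0) / (c0 + 4)"
      using NX c0 by (intro add_left_mono divide_right_mono) auto
    also have "\<dots> = \<alpha> + \<gamma> * X G"
      unfolding \<alpha>_def \<gamma>_def by (simp add: diff_divide_distrib divide_divide_eq_left mult_ac)
    finally show ?thesis .
  qed
  have nn: "0 \<le> \<alpha> + \<gamma> * X G" for G
    using pw[of G] spectral_norm_nonneg[of "Abar + to_matrix G"] by (smt (verit) ln_ge_zero)
  have intX: "integrable ?M X"
    unfolding X_def by (rule integrable_lse_gen[OF \<sigma> b K])
  interpret P: prob_space ?M by (rule prob_PG[OF \<sigma>])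
  have intF: "integrable ?M (\<lambda>G. \<alpha> + \<gamma> * X G)"
    using intX by simp
  have "(\<integral>\<^sup>+ g. ennreal (ln (spectral_norm (Abar + to_matrix g) + 3)) \<partial>?M) \<le> (\<integral>\<^sup>+ G. ennreal (\<alpha> + \<gamma> * X G) \<partial>?M)"
    by (intro nn_integral_mono ennreal_leI pw)
  also have "\<dots> = ennreal (\<integral>G. \<alpha> + \<gamma> * X G \<partial>?M)"
    by (rule nn_integral_eq_integral[OF intF]) (use nn in auto)
  also have "(\<integral>G. \<alpha> + \<gamma> * X G \<partial>?M) = \<alpha> + \<gamma> * (\<integral>G. X G \<partial>?M)"
    using intX by (simp add: P.prob_space)
  also have "\<dots> \<le> \<alpha> + \<gamma> * (ln (card ?K) + b * (\<sigma> * sqrt CARD('n) + \<sigma> * sqrt CARD('m)))"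
    using gordon_G[OF \<sigma> b Nu(1-3) Nv(1-3)] \<gamma>0 unfolding X_def
    by (intro add_left_mono mult_left_mono) auto
  also have "\<sigma> * sqrt CARD('n) + \<sigma> * sqrt CARD('m) = c0"
    unfolding c0_def by (simp add: algebra_simps)
  also have "\<alpha> + \<gamma> * (ln (card ?K) + b * c0) = ln (c0 + 4) + ((ln (card ?K) / b + c0) / (1 - 2 * e) - c0) / (c0 + 4)"
  proof -
    have n: "b \<noteq> 0" "1 - 2 * e \<noteq> 0" "c0 + 4 \<noteq> 0" using b e2 c0 by auto
    let ?L = "ln (card ?K)"
    have 1: "(?L / b + c0) / (1 - 2 * e) = (?L + b * c0) / (b * (1 - 2 * e))"
      using n by (simp add: field_simps)
    have 2: "((?L + b * c0) / (b * (1 - 2 * e)) - c0) / (c0 + 4) = (?L + b * c0) / ((c0 + 4) * (1 - 2 * e) * b) - c0 / (c0 + 4)"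
      by (simp add: diff_divide_distrib mult_ac)
    have 3: "\<gamma> * (?L + b * c0) = (?L + b * c0) / ((c0 + 4) * (1 - 2 * e) * b)"
      unfolding \<gamma>_def by simp
    show ?thesis unfolding 1 2 3 \<alpha>_def by simp
  qed
  finally show ?thesis
    unfolding gaussian_noise_def by (simp add: ennreal_leI)
qed

lemma choose_bound:
  fixes L c0 e b d :: real
  assumes L: "0 \<le> L" and c0: "0 \<le> c0" and d: "0 < d"
    and e: "0 < e" "e \<le> 1/4" "e \<le> d / (8 * (c0 + 1))"
    and b: "b = 4 * (L + 1) / d"
  shows "((L / b + c0) / (1 - 2 * e) - c0) / (c0 + 4) \<le> d"
proof -
  have q: "1/2 \<le> 1 - 2 * e" using e by simp
  have qp: "0 < 1 - 2 * e" using q by simp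
  have b0: "0 < b" unfolding b using L d by simp
  have Lb: "L / b = (L / (L + 1)) * (d / 4)" unfolding b using L d by (simp add: field_simps)
  have "L / (L + 1) \<le> 1" using L by simp
  then have "(L / (L + 1)) * (d / 4) \<le> 1 * (d / 4)" using d by (intro mult_right_mono) auto
  then have Lb': "L / b \<le> d / 4" unfolding Lb by simp
  have Lb0: "0 \<le> L / b" using L b0 by simp
  have inv: "1 / (1 - 2 * e) \<le> 2" using q qp by (simp add: field_simps)
  have t1: "(L / b) / (1 - 2 * e) \<le> 2 * (L / b)"
  proof -
    have "(L / b) / (1 - 2 * e) = (L / b) * (1 / (1 - 2 * e))" by simp
    also have "\<dots> \<le> (L / b) * 2" using inv Lb0 by (intro mult_left_mono) auto
    finally show ?thesis by (simp only: mult.commute)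
  qed
  have t2: "c0 / (1 - 2 * e) - c0 = (2 * e * c0) * (1 / (1 - 2 * e))"
    using qp by (simp add: field_simps)
  have t3: "(2 * e * c0) * (1 / (1 - 2 * e)) \<le> (2 * e * c0) * 2"
    using inv e c0 by (intro mult_left_mono) auto
  have t4: "4 * e * c0 \<le> d / 2"
  proof -
    have "4 * e * c0 \<le> 4 * (d / (8 * (c0 + 1))) * c0"
      using e c0 by (intro mult_right_mono mult_left_mono) auto
    also have "\<dots> = (d / 2) * (c0 / (c0 + 1))" using c0 by (simp add: field_simps)
    also have "\<dots> \<le> (d / 2) * 1" using c0 d by (intro mult_left_mono) auto
    finally show ?thesis by simp
  qed
  have br: "(L / b + c0) / (1 - 2 * e) - c0 = (L / b) / (1 - 2 * e) + (c0 / (1 - 2 * e) - c0)"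
    by (simp add: add_divide_distrib)
  have x: "(L / b + c0) / (1 - 2 * e) - c0 \<le> d"
    unfolding br t2 using t1 t3 t4 Lb' by linarith
  show ?thesis
  proof (cases "(L / b + c0) / (1 - 2 * e) - c0 \<le> 0")
    case True
    then have "((L / b + c0) / (1 - 2 * e) - c0) / (c0 + 4) \<le> 0"
      using c0 by (simp add: divide_nonpos_pos)
    then show ?thesis using d by simp
  next
    case False
    then have "((L / b + c0) / (1 - 2 * e) - c0) / (c0 + 4) \<le> ((L / b + c0) / (1 - 2 * e) - c0) / 1"
      using c0 by (intro divide_left_mono) auto
    then show ?thesis using x by simp
  qed
qed

theorem mainTheorem10:
  fixes Abar :: "real^'n::finite^'m::finite" and \<sigma> :: real
  assumes "spectral_norm Abar \<le> 1"
    and "0 < \<sigma>" and "\<sigma>\<^sup>2 \<le> 1"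
  shows "(\<integral>\<^sup>+ g. ennreal (ln (spectral_norm (Abar + to_matrix g) + 3))
            \<partial>(gaussian_noise \<sigma> :: ('m \<times> 'n \<Rightarrow> real) measure))
         \<le> ennreal (ln ((sqrt (real CARD('n)) + sqrt (real CARD('m))) * \<sigma> + 4))"
proof -
  note A = assms(1) and \<sigma> = assms(2)
  define c0 where "c0 = (sqrt (real CARD('n)) + sqrt (real CARD('m))) * \<sigma>"
  have c0: "0 \<le> c0" unfolding c0_def using \<sigma> by simp
  have "(\<integral>\<^sup>+ g. ennreal (ln (spectral_norm (Abar + to_matrix g) + 3))
            \<partial>(gaussian_noise \<sigma> :: ('m \<times> 'n \<Rightarrow> real) measure)) \<le> ennreal (ln (c0 + 4))"
  proof (rule ennreal_le_epsilon)
    fix d :: real assume d: "0 < d"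
    define e where "e = min (1/4) (d / (8 * (c0 + 1)))"
    have e1: "e \<le> 1/4" unfolding e_def by (rule min.cobounded1)
    have e2: "e \<le> d / (8 * (c0 + 1))" unfolding e_def by (rule min.cobounded2)
    have e0: "0 < e" unfolding e_def using d c0 by simp
    note e = e0 e1 e2
    obtain Nu :: "(real^'n) set" where Nu: "finite Nu" "Nu \<subseteq> sphere 0 1" "Nu \<noteq> {}"
      "\<And>x. x \<in> sphere 0 1 \<Longrightarrow> \<exists>u\<in>Nu. norm (x - u) \<le> e"
      using net_exists[OF e(1)] by blast
    obtain Nv0 :: "(real^'m) set" where Nv0: "finite Nv0" "Nv0 \<subseteq> sphere 0 1" "Nv0 \<noteq> {}"
      "\<And>x. x \<in> sphere 0 1 \<Longrightarrow> \<exists>u\<in>Nv0. norm (x - u) \<le> e"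
      using net_exists[OF e(1)] by blast
    define Nv where "Nv = Nv0 \<union> uminus ` Nv0"
    have Nv: "finite Nv" "Nv \<subseteq> sphere 0 1" "Nv \<noteq> {}"
      "\<And>x. x \<in> sphere 0 1 \<Longrightarrow> \<exists>v\<in>Nv. norm (x - v) \<le> e"
    proof -
      show "finite Nv" unfolding Nv_def using Nv0 by simp
      show "Nv \<subseteq> sphere 0 1" unfolding Nv_def using Nv0(2) by auto
      show "Nv \<noteq> {}" unfolding Nv_def using Nv0(3) by simp
      fix x :: "real^'m" assume "x \<in> sphere 0 1"
      then obtain u where "u \<in> Nv0" "norm (x - u) \<le> e" using Nv0(4) by blast
      then show "\<exists>v\<in>Nv. norm (x - v) \<le> e" unfolding Nv_def by blast
    qed
    have sym: "\<And>v. v \<in> Nv \<Longrightarrow> - v \<in> Nv" unfolding Nv_def by auto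
    define L where "L = ln (real (card (Nu \<times> Nv)))"
    have cK: "0 < card (Nu \<times> Nv)" using Nu(1,3) Nv(1,3) by (simp add: card_gt_0_iff)
    then have "1 \<le> real (card (Nu \<times> Nv))" by simp
    then have L: "0 \<le> L" unfolding L_def by (rule ln_ge_zero)
    define b where "b = 4 * (L + 1) / d"
    have b: "0 < b" unfolding b_def using L d by simp
    have "(\<integral>\<^sup>+ g. ennreal (ln (spectral_norm (Abar + to_matrix g) + 3))
            \<partial>(gaussian_noise \<sigma> :: ('m \<times> 'n \<Rightarrow> real) measure))
         \<le> ennreal (ln (c0 + 4) + ((L / b + c0) / (1 - 2 * e) - c0) / (c0 + 4))"
      unfolding L_def c0_def by (rule key_bound[OF A \<sigma> b e(1,2) Nu Nv sym])
    also have "\<dots> \<le> ennreal (ln (c0 + 4) + d)"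
      using choose_bound[OF L c0 d e b_def] by (intro ennreal_leI) simp
    also have "\<dots> = ennreal (ln (c0 + 4)) + ennreal d"
      using c0 d by (intro ennreal_plus) auto
    finally show "(\<integral>\<^sup>+ g. ennreal (ln (spectral_norm (Abar + to_matrix g) + 3))
            \<partial>(gaussian_noise \<sigma> :: ('m \<times> 'n \<Rightarrow> real) measure)) \<le> ennreal (ln (c0 + 4)) + ennreal d" .
  qed
  then show ?thesis unfolding c0_def .
qed

end
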